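(* Let $V$ be an $R$-module and $A=\Gamma_R(V)$ the free $DP$ algebra on $V$. Then the indecomposable quotient of $A$ is $A/A^2\cong U(0)\otimes_R V$, where $A^2$ is the $R$-submodule spanned by products $ab$, $a,b\in A$.
   Context: Fix a commutative unital ring $R$. An "algebra" means a commutative, not necessarily unital, $R$-algebra. A $DP$ algebra is an algebra $A$ with maps $\gamma_n:A\to A$ ($n\ge1$) such that for all $a,b\in A$, $r\in R$, $m,n\ge1$: $\gamma_1(a)=a$; $\gamma_n(a+b)=\gamma_n(a)+\sum_{i+j=n,\,i,j\ge1}\gamma_i(a)\gamma_j(b)+\gamma_n(b)$; $\gamma_n(ab)=a^n\gamma_n(b)$; $\gamma_n(rb)=r^n\gamma_n(b)$; $\gamma_m(a)\gamma_n(a)=\frac{(m+n)!}{m!\,n!}\gamma_{m+n}(a)$; $\gamma_m(\gamma_n(a))=\frac{(mn)!}{m!(n!)^m}\gamma_{mn}(a)$. $\Gamma_R(V)$ is the free $DP$ algebra on $V$. $U(0)$ is the unital ring generated by $R$ and symbols $\phi_p$ ($p$ prime), commuting with one another, subject to $p\phi_p=0$ and $\phi_pr=r^p\phi_p$ ($r\in R$); $U(0)\otimes_R V$ uses the right $R$-module structure of $U(0)$ and is a left $U(0)$-module. The isomorphism is one of abelian $DP$ algebras (left $U(0)$-modules), $\phi_p$ acting on $A/A^2$ via $\gamma_p$. *)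

theory Defs
  imports Main "HOL.Modules" "HOL-Computational_Algebra.Primes"
begin

section \<open>The free DP algebra Gamma_R(V) by generators and relations\<close>

text \<open>Terms of the signature of (non-unital, commutative) R-algebras with
  divided powers, with generators the elements of V.  DGam n a stands for
  gamma_n(a); only n >= 1 is meaningful (see dp_wf).\<close>

datatype ('r, 'v) dpt =
    DGen 'v
  | DZero
  | DAdd "('r, 'v) dpt" "('r, 'v) dpt"
  | DNeg "('r, 'v) dpt"
  | DMul "('r, 'v) dpt" "('r, 'v) dpt"
  | DSmul 'r "('r, 'v) dpt"
  | DGam nat "('r, 'v) dpt"

fun dp_wf :: "('r, 'v) dpt \<Rightarrow> bool" where
  "dp_wf (DGen v) = True"
| "dp_wf DZero = True"
| "dp_wf (DAdd a b) = (dp_wf a \<and> dp_wf b)"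
| "dp_wf (DNeg a) = dp_wf a"
| "dp_wf (DMul a b) = (dp_wf a \<and> dp_wf b)"
| "dp_wf (DSmul r a) = dp_wf a"
| "dp_wf (DGam n a) = (1 \<le> n \<and> dp_wf a)"

definition dsum :: "('r, 'v) dpt list \<Rightarrow> ('r, 'v) dpt" where
  "dsum xs = foldr DAdd xs DZero"

text \<open>dpow a k is the (k+1)-st power a^(k+1) in the non-unital algebra.\<close>
fun dpow :: "('r, 'v) dpt \<Rightarrow> nat \<Rightarrow> ('r, 'v) dpt" where
  "dpow a 0 = a"
| "dpow a (Suc k) = DMul a (dpow a k)"

text \<open>The quotient of
  the well-formed terms by this congruence is Gamma_R(V).\<close>

inductive dp_eq :: "('r::comm_ring_1 \<Rightarrow> 'v::ab_group_add \<Rightarrow> 'v) \<Rightarrow> ('r, 'v) dpt \<Rightarrow> ('r, 'v) dpt \<Rightarrow> bool"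
  for scale where
  dp_refl: "dp_eq scale a a"
| dp_sym: "dp_eq scale a b \<Longrightarrow> dp_eq scale b a"
| dp_trans: "dp_eq scale a b \<Longrightarrow> dp_eq scale b c \<Longrightarrow> dp_eq scale a c"
| dp_cong_add: "dp_eq scale a a' \<Longrightarrow> dp_eq scale b b' \<Longrightarrow> dp_eq scale (DAdd a b) (DAdd a' b')"
| dp_cong_neg: "dp_eq scale a a' \<Longrightarrow> dp_eq scale (DNeg a) (DNeg a')"
| dp_cong_mul: "dp_eq scale a a' \<Longrightarrow> dp_eq scale b b' \<Longrightarrow> dp_eq scale (DMul a b) (DMul a' b')"
| dp_cong_smul: "dp_eq scale a a' \<Longrightarrow> dp_eq scale (DSmul r a) (DSmul r a')"
| dp_cong_gam: "dp_eq scale a a' \<Longrightarrow> dp_eq scale (DGam n a) (DGam n a')"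
| dp_add_assoc: "dp_eq scale (DAdd (DAdd a b) c) (DAdd a (DAdd b c))"
| dp_add_comm: "dp_eq scale (DAdd a b) (DAdd b a)"
| dp_add_zero: "dp_eq scale (DAdd a DZero) a"
| dp_add_neg: "dp_eq scale (DAdd a (DNeg a)) DZero"
| dp_mul_assoc: "dp_eq scale (DMul (DMul a b) c) (DMul a (DMul b c))"
| dp_mul_comm: "dp_eq scale (DMul a b) (DMul b a)"
| dp_distrib: "dp_eq scale (DMul a (DAdd b c)) (DAdd (DMul a b) (DMul a c))"
| dp_smul_add: "dp_eq scale (DSmul r (DAdd a b)) (DAdd (DSmul r a) (DSmul r b))"
| dp_add_smul: "dp_eq scale (DSmul (r + s) a) (DAdd (DSmul r a) (DSmul s a))"
| dp_smul_smul: "dp_eq scale (DSmul (r * s) a) (DSmul r (DSmul s a))"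
| dp_smul_one: "dp_eq scale (DSmul 1 a) a"
| dp_smul_mul: "dp_eq scale (DSmul r (DMul a b)) (DMul (DSmul r a) b)"
| dp_gen_add: "dp_eq scale (DGen (u + v)) (DAdd (DGen u) (DGen v))"
| dp_gen_smul: "dp_eq scale (DGen (scale r v)) (DSmul r (DGen v))"
| dp_gam_one: "dp_eq scale (DGam 1 a) a"
| dp_gam_add: "1 \<le> n \<Longrightarrow> dp_eq scale (DGam n (DAdd a b))
     (DAdd (DGam n a) (DAdd (dsum (map (\<lambda>i. DMul (DGam i a) (DGam (n - i) b)) [1..<n])) (DGam n b)))"
| dp_gam_mul: "1 \<le> n \<Longrightarrow> dp_eq scale (DGam n (DMul a b)) (DMul (dpow a (n - 1)) (DGam n b))"
| dp_gam_smul: "1 \<le> n \<Longrightarrow> dp_eq scale (DGam n (DSmul r b)) (DSmul (r ^ n) (DGam n b))"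
| dp_gam_prod: "1 \<le> m \<Longrightarrow> 1 \<le> n \<Longrightarrow> dp_eq scale (DMul (DGam m a) (DGam n a))
     (DSmul (of_nat ((m + n) choose m)) (DGam (m + n) a))"
| dp_gam_comp: "1 \<le> m \<Longrightarrow> 1 \<le> n \<Longrightarrow> dp_eq scale (DGam m (DGam n a))
     (DSmul (of_nat (fact (m * n) div (fact m * fact n ^ m))) (DGam (m * n) a))"

definition dp_sq :: "('r::comm_ring_1 \<Rightarrow> 'v::ab_group_add \<Rightarrow> 'v) \<Rightarrow> ('r, 'v) dpt \<Rightarrow> bool" where
  "dp_sq scale t \<longleftrightarrow> (\<exists>ps. (\<forall>(r, a, b) \<in> set ps. dp_wf a \<and> dp_wf b) \<and>
      dp_eq scale t (dsum (map (\<lambda>(r, a, b). DSmul r (DMul a b)) ps)))"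

definition dp_indec_eq :: "('r::comm_ring_1 \<Rightarrow> 'v::ab_group_add \<Rightarrow> 'v) \<Rightarrow> ('r, 'v) dpt \<Rightarrow> ('r, 'v) dpt \<Rightarrow> bool" where
  "dp_indec_eq scale a b \<longleftrightarrow> dp_sq scale (DAdd a (DNeg b))"

section \<open>The ring U(0) by generators and relations\<close>

datatype 'r ut =
    UR 'r
  | Phi nat
  | UAdd "'r ut" "'r ut"
  | UNeg "'r ut"
  | UMul "'r ut" "'r ut"

fun u_wf :: "'r ut \<Rightarrow> bool" where
  "u_wf (UR r) = True"
| "u_wf (Phi p) = prime p"
| "u_wf (UAdd a b) = (u_wf a \<and> u_wf b)"
| "u_wf (UNeg a) = u_wf a"
| "u_wf (UMul a b) = (u_wf a \<and> u_wf b)"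

inductive u_eq :: "'r::comm_ring_1 ut \<Rightarrow> 'r ut \<Rightarrow> bool" where
  u_refl: "u_eq a a"
| u_sym: "u_eq a b \<Longrightarrow> u_eq b a"
| u_trans: "u_eq a b \<Longrightarrow> u_eq b c \<Longrightarrow> u_eq a c"
| u_cong_add: "u_eq a a' \<Longrightarrow> u_eq b b' \<Longrightarrow> u_eq (UAdd a b) (UAdd a' b')"
| u_cong_neg: "u_eq a a' \<Longrightarrow> u_eq (UNeg a) (UNeg a')"
| u_cong_mul: "u_eq a a' \<Longrightarrow> u_eq b b' \<Longrightarrow> u_eq (UMul a b) (UMul a' b')"
| u_add_assoc: "u_eq (UAdd (UAdd a b) c) (UAdd a (UAdd b c))"
| u_add_comm: "u_eq (UAdd a b) (UAdd b a)"
| u_add_zero: "u_eq (UAdd a (UR 0)) a"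
| u_add_neg: "u_eq (UAdd a (UNeg a)) (UR 0)"
| u_mul_assoc: "u_eq (UMul (UMul a b) c) (UMul a (UMul b c))"
| u_distrib_left: "u_eq (UMul a (UAdd b c)) (UAdd (UMul a b) (UMul a c))"
| u_distrib_right: "u_eq (UMul (UAdd a b) c) (UAdd (UMul a c) (UMul b c))"
| u_one_left: "u_eq (UMul (UR 1) a) a"
| u_one_right: "u_eq (UMul a (UR 1)) a"
| u_R_add: "u_eq (UR (r + s)) (UAdd (UR r) (UR s))"
| u_R_mul: "u_eq (UR (r * s)) (UMul (UR r) (UR s))"
| u_phi_comm: "prime p \<Longrightarrow> prime q \<Longrightarrow> u_eq (UMul (Phi p) (Phi q)) (UMul (Phi q) (Phi p))"
| u_phi_char: "prime p \<Longrightarrow> u_eq (UMul (UR (of_nat p)) (Phi p)) (UR 0)"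
| u_phi_frob: "prime p \<Longrightarrow> u_eq (UMul (Phi p) (UR r)) (UMul (UR (r ^ p)) (Phi p))"

section \<open>The tensor product U(0) (x)_R V\<close>

datatype ('r, 'v) tt =
    T "'r ut" 'v
  | TZero
  | TAdd "('r, 'v) tt" "('r, 'v) tt"
  | TNeg "('r, 'v) tt"

fun t_wf :: "('r, 'v) tt \<Rightarrow> bool" where
  "t_wf (T u v) = u_wf u"
| "t_wf TZero = True"
| "t_wf (TAdd a b) = (t_wf a \<and> t_wf b)"
| "t_wf (TNeg a) = t_wf a"

text \<open>Free abelian group on U(0) x V modulo bilinearity and R-balancedness
  (U(0) a right R-module via right multiplication by R).\<close>
inductive t_eq :: "('r::comm_ring_1 \<Rightarrow> 'v::ab_group_add \<Rightarrow> 'v) \<Rightarrow> ('r, 'v) tt \<Rightarrow> ('r, 'v) tt \<Rightarrow> bool"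
  for scale where
  t_refl: "t_eq scale a a"
| t_sym: "t_eq scale a b \<Longrightarrow> t_eq scale b a"
| t_trans: "t_eq scale a b \<Longrightarrow> t_eq scale b c \<Longrightarrow> t_eq scale a c"
| t_cong_add: "t_eq scale a a' \<Longrightarrow> t_eq scale b b' \<Longrightarrow> t_eq scale (TAdd a b) (TAdd a' b')"
| t_cong_neg: "t_eq scale a a' \<Longrightarrow> t_eq scale (TNeg a) (TNeg a')"
| t_cong_T: "u_eq u u' \<Longrightarrow> t_eq scale (T u v) (T u' v)"
| t_add_assoc: "t_eq scale (TAdd (TAdd a b) c) (TAdd a (TAdd b c))"
| t_add_comm: "t_eq scale (TAdd a b) (TAdd b a)"
| t_add_zero: "t_eq scale (TAdd a TZero) a"
| t_add_neg: "t_eq scale (TAdd a (TNeg a)) TZero"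
| t_bil_left: "t_eq scale (T (UAdd u u') v) (TAdd (T u v) (T u' v))"
| t_bil_right: "t_eq scale (T u (v + w)) (TAdd (T u v) (T u w))"
| t_balanced: "t_eq scale (T (UMul u (UR r)) v) (T u (scale r v))"

fun tact :: "'r ut \<Rightarrow> ('r, 'v) tt \<Rightarrow> ('r, 'v) tt" where
  "tact w (T u v) = T (UMul w u) v"
| "tact w TZero = TZero"
| "tact w (TAdd a b) = TAdd (tact w a) (tact w b)"
| "tact w (TNeg a) = TNeg (tact w a)"

end

theory Submission
  imports Defs "HOL-Number_Theory.Cong" "HOL-Number_Theory.Prime_Powers"
begin

lemma nt1:
  assumes p: "prime (p::nat)" and i: "0 < i" "i < p ^ j" and N: "p ^ j dvd N"
  shows "p dvd (N choose i)"
proof (rule ccontr)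
  assume np: "\<not> p dvd (N choose i)"
  have "i * (N choose i) = N * ((N - 1) choose (i - 1))"
    using times_binomial_minus1_eq[OF i(1)] .
  hence "p ^ j dvd i * (N choose i)" using N by (metis dvd_mult2)
  moreover have "coprime (p ^ j) (N choose i)"
    using np p by (simp add: prime_imp_coprime)
  ultimately have "p ^ j dvd i" using coprime_dvd_mult_left_iff by blast
  thus False using i by (simp add: nat_dvd_not_less)
qed

lemma nt_mid_sum:
  assumes p: "prime (p::nat)" and N: "p ^ j dvd M"
  shows "p dvd (\<Sum>i\<in>{1..<p^j}. (M choose i) * f i)"
  by (rule dvd_sum) (use nt1[OF p _ _ N] in auto)

lemma nt5:
  assumes p: "prime (p::nat)"
  shows "[(m * p ^ k) choose (p ^ k) = m] (mod p)"
proof (induction m)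
  case 0
  have "0 < p ^ k" using p prime_gt_0_nat by simp
  then show ?case by (simp add: binomial_eq_0 cong_def)
next
  case (Suc m)
  define N where "N = p ^ k"
  have N0: "0 < N" using p prime_gt_0_nat N_def by simp
  have "(Suc m * N) choose N = (\<Sum>i\<le>N. ((m*N) choose i) * (N choose (N - i)))"
    using vandermonde[of "m*N" N N] by (simp add: add.commute)
  also have "{..N} = insert 0 (insert N {1..<N})" using N0 by auto
  also have "(\<Sum>i\<in>insert 0 (insert N {1..<N}). ((m*N) choose i) * (N choose (N - i)))
      = 1 + ((m*N) choose N) + (\<Sum>i\<in>{1..<N}. ((m*N) choose i) * (N choose (N - i)))"
    using N0 by (simp add: sum.insert)
  finally have eq: "(Suc m * N) choose N = 1 + ((m*N) choose N) + (\<Sum>i\<in>{1..<N}. ((m*N) choose i) * (N choose (N - i)))" .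
  have "p dvd (\<Sum>i\<in>{1..<N}. ((m*N) choose i) * (N choose (N - i)))"
    unfolding N_def by (rule nt_mid_sum[OF p]) simp
  hence "[(\<Sum>i\<in>{1..<N}. ((m*N) choose i) * (N choose (N - i))) = 0] (mod p)"
    by (simp add: cong_0_iff)
  moreover have "[(m*N) choose N = m] (mod p)" using Suc N_def by simp
  ultimately have "[1 + ((m*N) choose N) + (\<Sum>i\<in>{1..<N}. ((m*N) choose i) * (N choose (N - i))) = 1 + m + 0] (mod p)"
    by (intro cong_add cong_refl)
  then show ?case using eq N_def by simp
qed

lemma nt2:
  assumes p: "prime (p::nat)" and k: "1 \<le> k"
  shows "[(k * p ^ j - 1) choose (p ^ j - 1) = 1] (mod p)"
proof -
  define N where "N = p ^ j"
  have N0: "0 < N" using p prime_gt_0_nat N_def by simp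
  have kN: "k * N - 1 = (k - 1) * N + (N - 1)" using k N0
  proof -
    obtain k' where "k = Suc k'" using k by (cases k) auto
    thus ?thesis using N0 by (simp add: algebra_simps)
  qed
  have "(k * N - 1) choose (N - 1) = (\<Sum>i\<le>N - 1. (((k - 1) * N) choose i) * ((N - 1) choose (N - 1 - i)))"
    using vandermonde[of "(k-1)*N" "N - 1" "N - 1"] kN by simp
  also have "{..N - 1} = insert 0 {1..<N}" using N0 by auto
  also have "(\<Sum>i\<in>insert 0 {1..<N}. (((k - 1) * N) choose i) * ((N - 1) choose (N - 1 - i)))
     = 1 + (\<Sum>i\<in>{1..<N}. (((k - 1) * N) choose i) * ((N - 1) choose (N - 1 - i)))"
    by (simp add: sum.insert)
  finally have eq: "(k * N - 1) choose (N - 1) = 1 + (\<Sum>i\<in>{1..<N}. (((k - 1) * N) choose i) * ((N - 1) choose (N - 1 - i)))" .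
  have "p dvd (\<Sum>i\<in>{1..<N}. (((k - 1) * N) choose i) * ((N - 1) choose (N - 1 - i)))"
    unfolding N_def by (rule nt_mid_sum[OF p]) simp
  then obtain t where "(\<Sum>i\<in>{1..<N}. (((k - 1) * N) choose i) * ((N - 1) choose (N - 1 - i))) = p * t"
    by (auto elim: dvdE)
  hence "(k * N - 1) choose (N - 1) = 1 + p * t" using eq by simp
  moreover have "[1 + p * t = 1] (mod p)" unfolding cong_def by (metis mod_mult_self2 mult.commute)
  ultimately show ?thesis using N_def by simp
qed

definition CC :: "nat \<Rightarrow> nat \<Rightarrow> nat" where
  "CC m n = fact (m * n) div (fact m * fact n ^ m)"

lemma fact_prod_decomp:
  assumes n: "1 \<le> n"
  shows "fact (m * n) = (\<Prod>k\<in>{1..m}. ((k * n - 1) choose (n - 1))) * fact m * (fact n ^ m :: nat)"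
proof (induction m)
  case 0 then show ?case by simp
next
  case (Suc m)
  define B where "B = (Suc m * n - 1) choose (n - 1)"
  have b1: "fact n * fact (m * n) * ((Suc m * n) choose n) = (fact (Suc m * n) :: nat)"
    using binomial_fact_lemma[of n "Suc m * n"] by simp
  have "n * ((Suc m * n) choose n) = Suc m * n * B"
    using times_binomial_minus1_eq[of n "Suc m * n"] n B_def by simp
  hence "n * ((Suc m * n) choose n) = n * (Suc m * B)" by (simp add: algebra_simps)
  hence b2: "(Suc m * n) choose n = Suc m * B" using n by simp
  have pe: "(\<Prod>k\<in>{1..Suc m}. ((k * n - 1) choose (n - 1))) = (\<Prod>k\<in>{1..m}. ((k * n - 1) choose (n - 1))) * B"
    by (simp add: prod.nat_ivl_Suc' B_def)
  have f1: "fact (Suc m * n) = fact n * fact (m*n) * (Suc m * B)" using b1 b2 by simp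
  show ?case unfolding pe f1 Suc.IH fact_Suc power_Suc of_nat_id
    by (simp only: ac_simps)
qed

lemma CC_prod:
  assumes n: "1 \<le> n"
  shows "CC m n = (\<Prod>k\<in>{1..m}. ((k * n - 1) choose (n - 1)))"
  unfolding CC_def fact_prod_decomp[OF n, of m]
  by (simp add: mult.assoc)

lemma nt4:
  assumes p: "prime (p::nat)"
  shows "[CC m (p ^ j) = 1] (mod p)"
proof -
  have n: "1 \<le> p ^ j" using p prime_gt_0_nat by (simp add: Suc_leI)
  have "[(\<Prod>k\<in>{1..m}. ((k * p ^ j - 1) choose (p ^ j - 1))) = (\<Prod>k\<in>{1..m}. 1)] (mod p)"
    by (rule cong_prod) (use nt2[OF p] in auto)
  then show ?thesis using CC_prod[OF n] by simp
qed

lemma CC_1_left: "CC 1 n = 1" by (simp add: CC_def)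
lemma CC_1_right: "CC m 1 = 1" by (simp add: CC_def)

lemma int_ideal_gen:
  fixes S :: "int set"
  assumes add: "\<And>x y. x \<in> S \<Longrightarrow> y \<in> S \<Longrightarrow> x + y \<in> S"
    and mul: "\<And>c x. x \<in> S \<Longrightarrow> c * x \<in> S"
    and n: "n \<in> S" "n \<noteq> 0"
  shows "\<exists>d>0. d \<in> S \<and> (\<forall>x\<in>S. d dvd x)"
proof -
  define P where "P k \<longleftrightarrow> 0 < k \<and> int k \<in> S" for k :: nat
  have "\<bar>n\<bar> \<in> S" using mul[OF n(1), of "sgn n"] by (simp add: abs_sgn mult.commute)
  hence "P (nat \<bar>n\<bar>)" unfolding P_def using n by simp
  hence Pd: "P (LEAST k. P k)" by (rule LeastI)
  define d where "d = int (LEAST k. P k)"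
  have d: "d > 0" "d \<in> S" using Pd unfolding P_def d_def by auto
  have "d dvd x" if x: "x \<in> S" for x
  proof (rule ccontr)
    assume nd: "\<not> d dvd x"
    have "x mod d = x + (- (x div d)) * d" using minus_div_mult_eq_mod[of x d] by simp
    moreover have "x + (- (x div d)) * d \<in> S" using add[OF x mul[OF d(2)]] by blast
    ultimately have "x mod d \<in> S" by simp
    moreover have "0 < x mod d" "x mod d < d" using nd d(1)
      using pos_mod_sign[of d x] pos_mod_bound[of d x] nd d(1) unfolding dvd_eq_mod_eq_0 by linarith+
    ultimately have "P (nat (x mod d))" unfolding P_def by simp
    hence "(LEAST k. P k) \<le> nat (x mod d)" by (rule Least_le)
    thus False using \<open>x mod d < d\<close> \<open>0 < x mod d\<close> unfolding d_def by linarith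
  qed
  thus ?thesis using d by blast
qed


quotient_type (overloaded) 'r u0 = "'r::comm_ring_1 ut" / u_eq
  by (rule equivpI) (auto simp: reflp_def symp_def transp_def intro: u_refl u_sym u_trans)

fun uev :: "'r::comm_ring_1 ut \<Rightarrow> 'r" where
  "uev (UR r) = r"
| "uev (Phi p) = 0"
| "uev (UAdd a b) = uev a + uev b"
| "uev (UNeg a) = - uev a"
| "uev (UMul a b) = uev a * uev b"

lemma u_eq_uev: "u_eq a b \<Longrightarrow> uev a = uev b"
  by (induction rule: u_eq.induct) (auto simp: algebra_simps)

instantiation u0 :: (comm_ring_1) ring_1
begin
lift_definition zero_u0 :: "'a u0" is "UR 0" .
lift_definition one_u0 :: "'a u0" is "UR 1" .
lift_definition plus_u0 :: "'a u0 \<Rightarrow> 'a u0 \<Rightarrow> 'a u0" is UAdd by (rule u_cong_add)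
lift_definition uminus_u0 :: "'a u0 \<Rightarrow> 'a u0" is UNeg by (rule u_cong_neg)
lift_definition times_u0 :: "'a u0 \<Rightarrow> 'a u0 \<Rightarrow> 'a u0" is UMul by (rule u_cong_mul)
definition minus_u0 :: "'a u0 \<Rightarrow> 'a u0 \<Rightarrow> 'a u0" where "minus_u0 a b = a + - b"
instance
proof
  fix a b c :: "'a u0"
  show "a + b + c = a + (b + c)" by transfer (rule u_add_assoc)
  show "a + b = b + a" by transfer (rule u_add_comm)
  show "0 + a = a" by transfer (meson u_add_comm u_add_zero u_trans)
  show "- a + a = 0" by transfer (meson u_add_comm u_add_neg u_trans)
  show "a - b = a + - b" by (simp add: minus_u0_def)
  show "a * b * c = a * (b * c)" by transfer (rule u_mul_assoc)
  show "1 * a = a" by transfer (rule u_one_left)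
  show "a * 1 = a" by transfer (rule u_one_right)
  show "(a + b) * c = a * c + b * c" by transfer (rule u_distrib_right)
  show "a * (b + c) = a * b + a * c" by transfer (rule u_distrib_left)
  show "(0::'a u0) \<noteq> 1" by transfer (auto dest: u_eq_uev)
qed
end

lift_definition ur :: "'r::comm_ring_1 \<Rightarrow> 'r u0" is UR .
lift_definition phi :: "nat \<Rightarrow> 'r::comm_ring_1 u0" is Phi .

lemma ur_add: "ur (r + s) = ur r + ur s" by transfer (rule u_R_add)
lemma ur_mul: "ur (r * s) = ur r * ur s" by transfer (rule u_R_mul)
lemma ur_0: "ur 0 = 0" by transfer (rule u_refl)
lemma ur_1: "ur 1 = 1" by transfer (rule u_refl)
lemma ur_of_nat: "ur (of_nat n) = of_nat n"
  by (induction n) (simp_all add: ur_add ur_0 ur_1 add.commute)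
lemma ur_pow: "ur (r ^ n) = ur r ^ n"
  by (induction n) (simp_all add: ur_mul ur_1)
lemma phi_char: "prime p \<Longrightarrow> of_nat p * (phi p :: 'r::comm_ring_1 u0) = 0"
proof -
  assume p: "prime p"
  have "ur (of_nat p) * (phi p :: 'r u0) = 0" using p by transfer (rule u_phi_char)
  thus ?thesis by (simp add: ur_of_nat)
qed
lemma phi_frob: "prime p \<Longrightarrow> phi p * ur r = ur (r ^ p) * (phi p :: 'r::comm_ring_1 u0)"
  by transfer (rule u_phi_frob)


fun upow :: "'r::one ut \<Rightarrow> nat \<Rightarrow> 'r ut" where
  "upow w 0 = UR 1"
| "upow w (Suc k) = UMul w (upow w k)"

definition EE :: "nat \<Rightarrow> 'r::comm_ring_1 ut" where
  "EE n = (if n = 1 then UR 1 else if primepow n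
      then upow (Phi (aprimedivisor n)) (multiplicity (aprimedivisor n) n) else UR 0)"

lemma ur_abs: "abs_u0 (UR r) = ur r" by (simp add: ur.abs_eq)
lemma mul_abs: "abs_u0 (UMul a b) = abs_u0 a * abs_u0 b" by (simp add: times_u0.abs_eq)
lemma one_abs: "abs_u0 (UR 1) = 1" by (simp add: one_u0.abs_eq)
lemma zero_abs: "abs_u0 (UR 0) = 0" by (simp add: zero_u0.abs_eq)

lemma abs_upow: "abs_u0 (upow w k) = abs_u0 w ^ k"
  by (induction k) (simp_all add: one_abs mul_abs)

lemma EE_pp: "prime p \<Longrightarrow> 0 < k \<Longrightarrow> EE (p ^ k) = upow (Phi p) k"
proof -
  assume p: "prime p" and k: "0 < k"
  have "primepow (p ^ k)" using p k by (auto simp: primepow_def)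
  moreover have "p ^ k \<noteq> 1" using p k prime_gt_1_nat[of p] by simp
  ultimately show ?thesis unfolding EE_def using aprimedivisor_prime_power[OF p k] p by simp
qed

lemma EE_1: "EE 1 = UR 1" by (simp add: EE_def)
lemma EE_npp: "n \<noteq> 1 \<Longrightarrow> \<not> primepow n \<Longrightarrow> EE n = UR 0" by (simp add: EE_def)

lemma EE_prime: "prime p \<Longrightarrow> EE p = UMul (Phi p) (UR 1)"
  using EE_pp[of p 1] by simp

lemma EE_wf: "u_wf (EE n)"
proof -
  have "u_wf (upow (Phi p) k)" if "prime p" for p k using that by (induction k) auto
  moreover have "primepow n \<Longrightarrow> prime (aprimedivisor n)"
    by (auto simp: primepow_def aprimedivisor_prime_power)
  ultimately show ?thesis by (auto simp: EE_def)
qed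

abbreviation En :: "nat \<Rightarrow> 'r::comm_ring_1 u0" where "En n \<equiv> abs_u0 (EE n)"

lemma En_pp: "prime p \<Longrightarrow> 0 < k \<Longrightarrow> En (p ^ k) = phi p ^ k"
  by (simp add: EE_pp abs_upow phi_def)
lemma En_1: "En 1 = 1" by (subst EE_1) (rule one_abs)
lemma En_1': "En (Suc 0) = 1" using En_1 by (metis One_nat_def)
lemma En_npp: "n \<noteq> 1 \<Longrightarrow> \<not> primepow n \<Longrightarrow> En n = 0" by (simp add: EE_npp zero_abs)

lemma phi_pow_frob: "prime p \<Longrightarrow> phi p ^ k * ur r = ur (r ^ (p ^ k)) * (phi p ^ k :: 'r::comm_ring_1 u0)"
proof (induction k arbitrary: r)
  case 0 then show ?case by (simp add: ur_1 ur_mul[symmetric] mult.commute)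
next
  case (Suc k)
  have "phi p ^ Suc k * ur r = phi p * (phi p ^ k * ur r)" by (simp add: mult.assoc)
  also have "\<dots> = (phi p * ur (r ^ (p ^ k))) * phi p ^ k" using Suc by (simp add: mult.assoc)
  also have "\<dots> = ur ((r ^ (p ^ k)) ^ p) * phi p * phi p ^ k" by (simp only: phi_frob[OF Suc.prems])
  also have "(r ^ (p ^ k)) ^ p = r ^ (p ^ Suc k)" by (simp add: power_mult[symmetric] mult.commute)
  finally show ?case by (simp add: mult.assoc)
qed

lemma U1: "1 \<le> n \<Longrightarrow> En n * ur r = ur (r ^ n) * (En n :: 'r::comm_ring_1 u0)"
proof -
  assume n: "1 \<le> n"
  show ?thesis
  proof (cases "n = 1")
    case True then show ?thesis using En_1 by (metis mult_1_left mult_1_right power_one_right)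
  next
    case n1: False
    show ?thesis
    proof (cases "primepow n")
      case True
      then obtain p k where "prime p" "0 < k" "n = p ^ k" by (auto simp: primepow_def)
      then show ?thesis using En_pp phi_pow_frob by metis
    next
      case False then show ?thesis using n1 by (simp add: En_npp)
    qed
  qed
qed

lemma phi_pow_char: "prime p \<Longrightarrow> 0 < k \<Longrightarrow> of_nat (p * c) * (phi p ^ k :: 'r::comm_ring_1 u0) = 0"
proof -
  assume p: "prime p" and k: "0 < k"
  obtain k' where k': "k = Suc k'" using k by (cases k) auto
  have e: "of_nat (p * c) * (phi p ^ k :: 'r u0) = of_nat c * (of_nat p * phi p) * phi p ^ k'"
    by (simp only: k' power_Suc of_nat_mult mult.commute[of p c] mult.assoc)
  have "of_nat p * phi p = (0 :: 'r u0)" by (rule phi_char[OF p])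
  thus ?thesis using e by simp
qed

lemma cong1_mult: "prime p \<Longrightarrow> 0 < k \<Longrightarrow> [c = 1] (mod p) \<Longrightarrow> of_nat c * (phi p ^ k :: 'r::comm_ring_1 u0) = phi p ^ k"
proof -
  assume p: "prime p" and k: "0 < k" and c: "[c = 1] (mod p)"
  have "c \<ge> 1" using c p prime_gt_1_nat[of p] by (cases c) (auto simp: cong_def)
  from cong_le_nat[OF \<open>c \<ge> 1\<close>, of p] c obtain t where "c = t * p + 1" by blast
  hence "c = 1 + p * t" by simp
  then show ?thesis using phi_pow_char[OF p k, of t] by (simp add: distrib_right)
qed

lemma phi_orth: "prime p \<Longrightarrow> prime q \<Longrightarrow> p \<noteq> q \<Longrightarrow> phi p * (phi q :: 'r::comm_ring_1 u0) = 0"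
proof -
  assume p: "prime p" and q: "prime q" and pq: "p \<noteq> q"
  have "gcd p q = 1" using p q pq by (simp add: primes_coprime)
  then obtain x y where xy: "p * x = q * y + 1" using bezout_nat[of p q] p
    by (metis prime_gt_0_nat not_gr0)
  have e1: "phi p * (phi q :: 'r u0) = of_nat (p * x) * (phi p * phi q) - of_nat (q * y) * (phi p * phi q)"
    by (simp add: xy distrib_right)
  have e2: "of_nat (p * x) * (phi p * phi q :: 'r u0) = of_nat x * (of_nat p * phi p) * phi q"
    by (simp only: of_nat_mult mult.commute[of p x] mult.assoc)
  have qc: "of_nat q * (phi p * phi q) = phi p * (of_nat q * (phi q::'r u0))"
    by (simp only: mult.assoc[symmetric] mult_of_nat_commute[of q "phi p"])
  have e3: "of_nat (q * y) * (phi p * phi q :: 'r u0) = of_nat y * phi p * (of_nat q * phi q)"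
    by (simp only: of_nat_mult mult.commute[of q y] mult.assoc qc)
  have "of_nat p * phi p = (0 :: 'r u0)" "of_nat q * phi q = (0 :: 'r u0)"
    using phi_char[OF p] phi_char[OF q] by auto
  then show ?thesis using e1 e2 e3 by simp
qed

lemma phi_pow_orth: "prime p \<Longrightarrow> prime q \<Longrightarrow> p \<noteq> q \<Longrightarrow> 0 < i \<Longrightarrow> 0 < j \<Longrightarrow>
   phi p ^ i * (phi q ^ j :: 'r::comm_ring_1 u0) = 0"
proof -
  assume a: "prime p" "prime q" "p \<noteq> q" "0 < i" "0 < j"
  obtain i' j' where "i = Suc i'" "j = Suc j'" using a by (metis gr0_conv_Suc)
  hence "phi p ^ i * (phi q ^ j :: 'r u0) = phi p ^ i' * (phi p * phi q) * phi q ^ j'"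
    by (simp only: power_Suc2[of "phi p"] power_Suc[of "phi q"] mult.assoc)
  moreover have "phi p * (phi q :: 'r u0) = 0" by (rule phi_orth[OF a(1-3)])
  ultimately show ?thesis by simp
qed

lemma U2: "1 \<le> m \<Longrightarrow> 1 \<le> n \<Longrightarrow> of_nat ((m + n) choose m) * (En (m + n) :: 'r::comm_ring_1 u0) = 0"
proof -
  assume m: "1 \<le> m" and n: "1 \<le> n"
  show ?thesis
  proof (cases "primepow (m + n)")
    case True
    then obtain p k where pk: "prime p" "0 < k" "m + n = p ^ k" by (auto simp: primepow_def)
    have "p dvd ((m + n) choose m)" using nt1[OF pk(1), of m k "m + n"] pk m n by simp
    then obtain c where "(m + n) choose m = p * c" by (auto elim: dvdE)
    then show ?thesis using pk En_pp phi_pow_char by metis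
  next
    case False then show ?thesis using m n by (simp add: En_npp)
  qed
qed

lemma pp_mult_diff:
  assumes "prime p" "prime q" "p \<noteq> q" "0 < i" "0 < j"
  shows "\<not> primepow (p ^ i * q ^ j)"
proof
  assume "primepow (p ^ i * q ^ j)"
  then obtain r k where r: "prime r" "p ^ i * q ^ j = r ^ k" by (auto simp: primepow_def)
  have "p dvd p ^ i * q ^ j" using assms(4) by (intro dvd_mult2) simp
  hence "p dvd r" using r prime_dvd_power[OF assms(1)] by metis
  hence pr: "p = r" using primes_dvd_imp_eq[OF assms(1) r(1)] by simp
  have "q dvd p ^ i * q ^ j" using assms(5) by (intro dvd_mult) simp
  hence "q dvd r" using r prime_dvd_power[OF assms(2)] by metis
  hence "q = r" using primes_dvd_imp_eq[OF assms(2) r(1)] by simp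
  with pr have "p = r" "q = r" by auto
  thus False using assms(3) by simp
qed

lemma U3: "1 \<le> m \<Longrightarrow> 1 \<le> n \<Longrightarrow> En m * En n = of_nat (CC m n) * (En (m * n) :: 'r::comm_ring_1 u0)"
proof -
  assume m: "1 \<le> m" and n: "1 \<le> n"
  consider "m = 1" | "n = 1" | "m \<noteq> 1" "n \<noteq> 1" by blast
  then show ?thesis
  proof cases
    case 1 then show ?thesis by (simp add: En_1' CC_def)
  next
    case 2 then show ?thesis by (simp add: En_1' CC_def)
  next
    case 3
    show ?thesis
    proof (cases "primepow m \<and> primepow n")
      case True
      then obtain p i q j where pq: "prime p" "0 < i" "m = p ^ i" "prime q" "0 < j" "n = q ^ j"
        by (auto simp: primepow_def)
      show ?thesis
      proof (cases "p = q")
        case True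
        have "m * n = p ^ (i + j)" using pq True by (simp add: power_add)
        have e1: "En m = (phi p ^ i :: 'r u0)" unfolding pq(3) by (rule En_pp) (use pq in auto)
        have e2: "En n = (phi p ^ j :: 'r u0)" unfolding pq(6) True[symmetric] by (rule En_pp) (use pq in auto)
        have e3: "En (m * n) = (phi p ^ (i + j) :: 'r u0)" by (subst \<open>m * n = p ^ (i + j)\<close>, rule En_pp) (use pq in auto)
        note e = e1 e2 e3
        have "of_nat (CC m n) * (phi p ^ (i + j) :: 'r u0) = phi p ^ (i + j)"
          using cong1_mult[OF pq(1), of "i+j" "CC m n"] nt4[OF pq(1), of m j] pq True by simp
        then show ?thesis using e by (simp add: power_add)
      next
        case False
        have "\<not> primepow (m * n)" using pp_mult_diff[OF pq(1) pq(4) False pq(2) pq(5)] pq by simp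
        moreover have "m * n \<noteq> 1" using 3 by simp
        ultimately have z: "En (m * n) = (0 :: 'r u0)" by (rule En_npp[rotated])
        have e1: "En m = (phi p ^ i :: 'r u0)" unfolding pq(3) by (rule En_pp) (use pq in auto)
        have e2: "En n = (phi q ^ j :: 'r u0)" unfolding pq(6) by (rule En_pp) (use pq in auto)
        have "phi p ^ i * (phi q ^ j :: 'r u0) = 0" by (rule phi_pow_orth[OF pq(1) pq(4) False pq(2) pq(5)])
        then show ?thesis using z e1 e2 by simp
      qed
    next
      case False
      have "\<not> primepow (m * n)" using False 3 primepow_multD by blast
      moreover have "m * n \<noteq> 1" using 3 by simp
      ultimately show ?thesis using False 3 by (auto simp: En_npp)
    qed
  qed
qed


locale abgrp =
  fixes eq :: "'a \<Rightarrow> 'a \<Rightarrow> bool" (infix "\<doteq>" 50)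
    and add :: "'a \<Rightarrow> 'a \<Rightarrow> 'a" and zero :: 'a and neg :: "'a \<Rightarrow> 'a"
  assumes g_refl: "a \<doteq> a" and g_sym: "a \<doteq> b \<Longrightarrow> b \<doteq> a"
    and g_trans[trans]: "a \<doteq> b \<Longrightarrow> b \<doteq> c \<Longrightarrow> a \<doteq> c"
    and g_cadd: "a \<doteq> a' \<Longrightarrow> b \<doteq> b' \<Longrightarrow> add a b \<doteq> add a' b'"
    and g_cneg: "a \<doteq> a' \<Longrightarrow> neg a \<doteq> neg a'"
    and g_assoc: "add (add a b) c \<doteq> add a (add b c)"
    and g_comm: "add a b \<doteq> add b a"
    and g_zero: "add a zero \<doteq> a"
    and g_negr: "add a (neg a) \<doteq> zero"
begin

lemma g_caddl: "a \<doteq> a' \<Longrightarrow> add a b \<doteq> add a' b" by (rule g_cadd) (auto intro: g_refl)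
lemma g_caddr: "b \<doteq> b' \<Longrightarrow> add a b \<doteq> add a b'" by (rule g_cadd) (auto intro: g_refl)

lemma g_zerol: "add zero a \<doteq> a" using g_comm g_zero g_trans by blast
lemma g_negl: "add (neg a) a \<doteq> zero" using g_comm g_negr g_trans by blast

lemma g_lcomm: "add a (add b c) \<doteq> add b (add a c)"
proof -
  have "add a (add b c) \<doteq> add (add a b) c" by (rule g_sym, rule g_assoc)
  also have "\<dots> \<doteq> add (add b a) c" by (rule g_caddl, rule g_comm)
  also have "\<dots> \<doteq> add b (add a c)" by (rule g_assoc)
  finally show ?thesis .
qed

lemma g_swap: "add (add a b) (add c d) \<doteq> add (add a c) (add b d)"
proof -
  have "add (add a b) (add c d) \<doteq> add a (add b (add c d))" by (rule g_assoc)
  also have "\<dots> \<doteq> add a (add c (add b d))" by (rule g_caddr, rule g_lcomm)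
  also have "\<dots> \<doteq> add (add a c) (add b d)" by (rule g_sym, rule g_assoc)
  finally show ?thesis .
qed

lemma g_cancel: "add a b \<doteq> add a c \<Longrightarrow> b \<doteq> c"
proof -
  assume h: "add a b \<doteq> add a c"
  have "b \<doteq> add zero b" by (rule g_sym, rule g_zerol)
  also have "\<dots> \<doteq> add (add (neg a) a) b" by (rule g_caddl, rule g_sym, rule g_negl)
  also have "\<dots> \<doteq> add (neg a) (add a b)" by (rule g_assoc)
  also have "\<dots> \<doteq> add (neg a) (add a c)" by (rule g_caddr, rule h)
  also have "\<dots> \<doteq> add (add (neg a) a) c" by (rule g_sym, rule g_assoc)
  also have "\<dots> \<doteq> add zero c" by (rule g_caddl, rule g_negl)
  also have "\<dots> \<doteq> c" by (rule g_zerol)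
  finally show ?thesis .
qed

lemma g_neg_uniq: "add a b \<doteq> zero \<Longrightarrow> b \<doteq> neg a"
  by (rule g_cancel[of a]) (meson g_negr g_sym g_trans)

lemma g_diff0: "add a (neg b) \<doteq> zero \<Longrightarrow> a \<doteq> b"
proof -
  assume "add a (neg b) \<doteq> zero"
  hence "neg b \<doteq> neg a" using g_neg_uniq by blast
  hence "add a (neg b) \<doteq> add b (neg b)" by (meson g_cadd g_negr g_refl g_sym g_trans)
  moreover have "add a (neg b) \<doteq> add (neg b) a" "add b (neg b) \<doteq> add (neg b) b" by (rule g_comm)+
  ultimately have "add (neg b) a \<doteq> add (neg b) b" by (meson g_sym g_trans)
  thus ?thesis by (rule g_cancel)
qed

lemma g_eq_diff: "a \<doteq> b \<Longrightarrow> add a (neg b) \<doteq> zero"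
  by (meson g_caddl g_negr g_trans)

lemma g_idem0: "add a a \<doteq> a \<Longrightarrow> a \<doteq> zero"
proof -
  assume "add a a \<doteq> a"
  hence "add a a \<doteq> add a zero" by (meson g_sym g_trans g_zero)
  thus ?thesis by (rule g_cancel)
qed

lemma g_neg_zero: "neg zero \<doteq> zero"
  by (meson g_neg_uniq g_sym g_zero)

lemma g_neg_neg: "neg (neg a) \<doteq> a"
  by (meson g_neg_uniq g_negl g_sym)

lemma g_neg_add: "neg (add a b) \<doteq> add (neg a) (neg b)"
proof -
  have "add (add a b) (add (neg a) (neg b)) \<doteq> add (add a (neg a)) (add b (neg b))" by (rule g_swap)
  also have "\<dots> \<doteq> add zero zero" by (rule g_cadd; rule g_negr)
  also have "\<dots> \<doteq> zero" by (rule g_zero)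
  finally show ?thesis by (rule g_sym[OF g_neg_uniq])
qed

lemma g_diff_trans: "add a (neg c) \<doteq> add (add a (neg b)) (add b (neg c))"
proof -
  have "add (add a (neg b)) (add b (neg c)) \<doteq> add (add a b) (add (neg b) (neg c))" by (rule g_swap)
  also have "\<dots> \<doteq> add (add b a) (add (neg b) (neg c))" by (rule g_caddl, rule g_comm)
  also have "\<dots> \<doteq> add (add b (neg b)) (add a (neg c))" by (rule g_swap)
  also have "\<dots> \<doteq> add zero (add a (neg c))" by (rule g_caddl, rule g_negr)
  also have "\<dots> \<doteq> add a (neg c)" by (rule g_zerol)
  finally show ?thesis by (rule g_sym)
qed

lemma g_diff_add: "add (add a b) (neg (add a' b')) \<doteq> add (add a (neg a')) (add b (neg b'))"
proof -
  have "add (add a b) (neg (add a' b')) \<doteq> add (add a b) (add (neg a') (neg b'))" by (rule g_caddr, rule g_neg_add)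
  also have "\<dots> \<doteq> add (add a (neg a')) (add b (neg b'))" by (rule g_swap)
  finally show ?thesis .
qed

lemma g_diff_neg: "add (neg a) (neg (neg b)) \<doteq> neg (add a (neg b))"
  by (meson g_neg_add g_sym)

lemma g_diff_swap: "add b (neg a) \<doteq> neg (add a (neg b))"
proof -
  have "add b (neg a) \<doteq> add (neg a) (neg (neg b))" by (meson g_comm g_caddr g_neg_neg g_sym g_trans)
  thus ?thesis using g_diff_neg g_trans by blast
qed

lemma g_add_zero_both: "a \<doteq> zero \<Longrightarrow> b \<doteq> zero \<Longrightarrow> add a b \<doteq> zero"
  by (meson g_cadd g_trans g_zero)

lemma g_add_diff_cancel: "add (add a b) (neg b) \<doteq> a"
  by (meson g_assoc g_caddr g_negr g_trans g_zero)

end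


interpretation tg: abgrp "t_eq scale" TAdd TZero TNeg
  by unfold_locales (auto intro: t_eq.intros)

lemma u_eq_absI: "abs_u0 a = abs_u0 b \<Longrightarrow> u_eq a b"
  using u0.abs_eq_iff by blast

lemma tact_cong: "t_eq scale a b \<Longrightarrow> t_eq scale (tact w a) (tact w b)"
proof (induction rule: t_eq.induct)
  case (t_cong_T u u' v) then show ?case by (auto intro: t_eq.intros u_eq.intros)
next
  case (t_bil_left u u' v)
  have "t_eq scale (T (UMul w (UAdd u u')) v) (T (UAdd (UMul w u) (UMul w u')) v)"
    by (auto intro: t_eq.intros u_eq.intros)
  then show ?case by (auto intro: t_eq.intros)
next
  case (t_balanced u r v)
  have "t_eq scale (T (UMul w (UMul u (UR r))) v) (T (UMul (UMul w u) (UR r)) v)"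
    by (auto intro: t_eq.intros u_eq.intros)
  then show ?case by (auto intro: t_eq.intros)
qed (auto intro: t_eq.intros)

lemma tact_ueq: "u_eq w w' \<Longrightarrow> t_eq scale (tact w t) (tact w' t)"
  by (induction t) (auto intro: t_eq.intros u_eq.intros)

lemma tact_abs: "abs_u0 w = abs_u0 w' \<Longrightarrow> t_eq scale (tact w t) (tact w' t)"
  by (rule tact_ueq, rule u_eq_absI)

lemma tact_mul: "t_eq scale (tact (UMul w1 w2) t) (tact w1 (tact w2 t))"
  by (induction t) (auto intro: t_eq.intros u_eq.intros)

lemma tact_add: "t_eq scale (tact (UAdd w w') t) (TAdd (tact w t) (tact w' t))"
proof (induction t)
  case (T u v)
  have "t_eq scale (T (UMul (UAdd w w') u) v) (T (UAdd (UMul w u) (UMul w' u)) v)"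
    by (auto intro: t_eq.intros u_eq.intros)
  then show ?case by (auto intro: t_eq.intros)
next
  case TZero then show ?case by (simp add: tg.g_sym tg.g_zero)
next
  case (TAdd a b) then show ?case by (simp; meson tg.g_cadd tg.g_swap tg.g_trans)
next
  case (TNeg a) then show ?case by (simp; meson tg.g_cneg tg.g_neg_add tg.g_trans)
qed

lemma tact_zero: "t_eq scale (tact (UR 0) t) TZero"
proof -
  have "t_eq scale (TAdd (tact (UR 0) t) (tact (UR 0) t)) (tact (UAdd (UR 0) (UR 0)) t)"
    by (rule tg.g_sym, rule tact_add)
  also have "t_eq scale \<dots> (tact (UR 0) t)" by (rule tact_ueq, rule u_add_zero)
  finally show ?thesis by (rule tg.g_idem0)
qed

lemma tact_one: "t_eq scale (tact (UR 1) t) t"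
  by (induction t) (auto intro: t_eq.intros u_eq.intros)

lemma tact_neg: "t_eq scale (tact (UNeg w) t) (TNeg (tact w t))"
proof -
  have "t_eq scale (TAdd (tact w t) (tact (UNeg w) t)) (tact (UAdd w (UNeg w)) t)"
    by (rule tg.g_sym, rule tact_add)
  also have "t_eq scale \<dots> (tact (UR 0) t)" by (rule tact_ueq, rule u_add_neg)
  also have "t_eq scale \<dots> TZero" by (rule tact_zero)
  finally show ?thesis by (rule tg.g_neg_uniq)
qed

lemma tact_TZero_eq: "t_eq scale t TZero \<Longrightarrow> t_eq scale (tact w t) TZero"
  using tact_cong[of scale t TZero w] by simp

lemma tact_wf: "u_wf w \<Longrightarrow> t_wf t \<Longrightarrow> t_wf (tact w t)"
  by (induction t) auto

fun ff :: "('r::comm_ring_1, 'v) dpt \<Rightarrow> ('r, 'v) tt" where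
  "ff (DGen v) = T (UR 1) v"
| "ff DZero = TZero"
| "ff (DAdd a b) = TAdd (ff a) (ff b)"
| "ff (DNeg a) = TNeg (ff a)"
| "ff (DMul a b) = TZero"
| "ff (DSmul r a) = tact (UR r) (ff a)"
| "ff (DGam n a) = tact (EE n) (ff a)"

lemma ff_wf: "t_wf (ff a)"
  by (induction a) (auto intro: tact_wf simp: EE_wf)

lemma ff_dsum_zero: "(\<And>x. x \<in> set xs \<Longrightarrow> t_eq scale (ff x) TZero) \<Longrightarrow> t_eq scale (ff (dsum xs)) TZero"
  by (induction xs) (auto simp: dsum_def intro: tg.g_add_zero_both tg.g_refl)


lemma ff_sound: "dp_eq scale a b \<Longrightarrow> t_eq scale (ff a) (ff b)"
proof (induction rule: dp_eq.induct)
  case (dp_cong_smul a a' r) then show ?case by (simp add: tact_cong)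
next
  case (dp_cong_gam a a' n) then show ?case by (simp add: tact_cong)
next
  case (dp_add_smul r s a)
  have "t_eq scale (tact (UR (r + s)) (ff a)) (tact (UAdd (UR r) (UR s)) (ff a))"
    by (rule tact_ueq, rule u_R_add)
  then show ?case using tact_add tg.g_trans by fastforce
next
  case (dp_smul_smul r s a)
  have "t_eq scale (tact (UR (r * s)) (ff a)) (tact (UMul (UR r) (UR s)) (ff a))"
    by (rule tact_ueq, rule u_R_mul)
  then show ?case using tact_mul tg.g_trans by fastforce
next
  case (dp_smul_one a) then show ?case by (simp add: tact_one)
next
  case (dp_gen_add u v) then show ?case by (simp add: t_bil_right)
next
  case (dp_gen_smul r v)
  have "t_eq scale (T (UMul (UR r) (UR 1)) v) (T (UMul (UR 1) (UR r)) v)"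
    by (rule t_cong_T, rule u_eq_absI) (simp add: mul_abs ur_abs ur_1)
  hence "t_eq scale (T (UMul (UR r) (UR 1)) v) (T (UR 1) (scale r v))"
    using t_balanced tg.g_trans by blast
  then show ?case by (simp add: tg.g_sym)
next
  case (dp_gam_one a) then show ?case by (simp add: EE_def tact_one)
next
  case (dp_gam_add n a b)
  let ?S = "dsum (map (\<lambda>i. DMul (DGam i a) (DGam (n - i) b)) [1..<n])"
  have "t_eq scale (ff ?S) TZero" by (rule ff_dsum_zero) (auto intro: t_refl)
  hence "t_eq scale (TAdd (ff ?S) (tact (EE n) (ff b))) (tact (EE n) (ff b))"
    by (meson tg.g_caddl tg.g_trans tg.g_zerol)
  then show ?case by (simp add: tg.g_sym tg.g_caddr)
next
  case (dp_gam_mul n a b) then show ?case by (simp add: tg.g_refl)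
next
  case (dp_gam_smul n r b)
  have "t_eq scale (tact (EE n) (tact (UR r) (ff b))) (tact (UMul (EE n) (UR r)) (ff b))"
    by (rule tg.g_sym, rule tact_mul)
  also have "t_eq scale \<dots> (tact (UMul (UR (r ^ n)) (EE n)) (ff b))"
    by (rule tact_abs) (simp add: mul_abs ur_abs U1[OF dp_gam_smul])
  also have "t_eq scale \<dots> (tact (UR (r ^ n)) (tact (EE n) (ff b)))" by (rule tact_mul)
  finally show ?case by simp
next
  case (dp_gam_prod m n a)
  have "t_eq scale (tact (UR (of_nat ((m + n) choose m))) (tact (EE (m + n)) (ff a)))
     (tact (UMul (UR (of_nat ((m + n) choose m))) (EE (m + n))) (ff a))"
    by (rule tg.g_sym, rule tact_mul)
  also have "t_eq scale \<dots> (tact (UR 0) (ff a))"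
    by (rule tact_abs) (simp add: mul_abs ur_abs ur_of_nat U2[OF dp_gam_prod] ur_0)
  also have "t_eq scale \<dots> TZero" by (rule tact_zero)
  finally show ?case by (simp add: tg.g_sym)
next
  case (dp_gam_comp m n a)
  have "t_eq scale (tact (EE m) (tact (EE n) (ff a))) (tact (UMul (EE m) (EE n)) (ff a))"
    by (rule tg.g_sym, rule tact_mul)
  also have "t_eq scale \<dots> (tact (UMul (UR (of_nat (CC m n))) (EE (m * n))) (ff a))"
    by (rule tact_abs) (simp add: mul_abs ur_abs ur_of_nat U3[OF dp_gam_comp])
  also have "t_eq scale \<dots> (tact (UR (of_nat (CC m n))) (tact (EE (m * n)) (ff a)))" by (rule tact_mul)
  finally show ?case by (simp add: CC_def)
qed (auto intro: t_eq.intros)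

lemma ff_sq: "dp_sq scale t \<Longrightarrow> t_eq scale (ff t) TZero"
proof -
  assume "dp_sq scale t"
  then obtain ps where "dp_eq scale t (dsum (map (\<lambda>(r, a, b). DSmul r (DMul a b)) ps))"
    unfolding dp_sq_def by blast
  moreover have "t_eq scale (ff (dsum (map (\<lambda>(r, a, b). DSmul r (DMul a b)) ps))) TZero"
    by (rule ff_dsum_zero) (auto intro: t_refl)
  ultimately show ?thesis using ff_sound tg.g_trans by blast
qed

lemma ff_indec: "dp_indec_eq scale a b \<Longrightarrow> t_eq scale (ff a) (ff b)"
  unfolding dp_indec_eq_def using ff_sq[of scale "DAdd a (DNeg b)"] tg.g_diff0 by simp


interpretation dg: abgrp "dp_eq scale" DAdd DZero DNeg
  by unfold_locales (auto intro: dp_eq.intros)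

lemma dsmul_zero: "dp_eq scale (DSmul r DZero) DZero"
proof -
  have "dp_eq scale (DAdd (DSmul r DZero) (DSmul r DZero)) (DSmul r (DAdd DZero DZero))"
    by (rule dg.g_sym, rule dp_smul_add)
  also have "dp_eq scale \<dots> (DSmul r DZero)" by (rule dp_cong_smul, rule dp_add_zero)
  finally show ?thesis by (rule dg.g_idem0)
qed

lemma dsmul_0: "dp_eq scale (DSmul 0 a) DZero"
proof -
  have "dp_eq scale (DAdd (DSmul 0 a) (DSmul 0 a)) (DSmul (0 + 0) a)"
    by (rule dg.g_sym, rule dp_add_smul)
  thus ?thesis by (intro dg.g_idem0) simp
qed

lemma dneg_smul: "dp_eq scale (DNeg (DSmul r a)) (DSmul (- r) a)"
proof -
  have "dp_eq scale (DAdd (DSmul r a) (DSmul (- r) a)) (DSmul (r + - r) a)"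
    by (rule dg.g_sym, rule dp_add_smul)
  also have "dp_eq scale \<dots> DZero" unfolding add.right_inverse by (rule dsmul_0)
  finally show ?thesis by (meson dg.g_neg_uniq dg.g_sym)
qed

lemma dneg_as_smul: "dp_eq scale (DNeg a) (DSmul (- 1) a)"
  by (meson dg.g_cneg dg.g_sym dg.g_trans dneg_smul dp_smul_one)

lemma dsmul_neg: "dp_eq scale (DSmul r (DNeg a)) (DNeg (DSmul r a))"
proof -
  have "dp_eq scale (DAdd (DSmul r a) (DSmul r (DNeg a))) (DSmul r (DAdd a (DNeg a)))"
    by (rule dg.g_sym, rule dp_smul_add)
  also have "dp_eq scale \<dots> (DSmul r DZero)" by (rule dp_cong_smul, rule dp_add_neg)
  also have "dp_eq scale \<dots> DZero" by (rule dsmul_zero)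
  finally show ?thesis by (rule dg.g_neg_uniq)
qed

lemma dmul_zero: "dp_eq scale (DMul a DZero) DZero"
proof -
  have "dp_eq scale (DAdd (DMul a DZero) (DMul a DZero)) (DMul a (DAdd DZero DZero))"
    by (rule dg.g_sym, rule dp_distrib)
  also have "dp_eq scale \<dots> (DMul a DZero)" by (rule dp_cong_mul, rule dp_refl, rule dp_add_zero)
  finally show ?thesis by (rule dg.g_idem0)
qed

definition mk :: "('r \<times> ('r, 'v) dpt \<times> ('r, 'v) dpt) list \<Rightarrow> ('r, 'v) dpt" where
  "mk ps = dsum (map (\<lambda>(r, a, b). DSmul r (DMul a b)) ps)"

definition wfl :: "('r \<times> ('r, 'v) dpt \<times> ('r, 'v) dpt) list \<Rightarrow> bool" where
  "wfl ps \<longleftrightarrow> (\<forall>(r, a, b) \<in> set ps. dp_wf a \<and> dp_wf b)"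

lemma dp_sq_iff: "dp_sq scale t \<longleftrightarrow> (\<exists>ps. wfl ps \<and> dp_eq scale t (mk ps))"
  unfolding dp_sq_def wfl_def mk_def ..

lemma mk_Nil: "mk [] = DZero" by (simp add: mk_def dsum_def)
lemma mk_Cons: "mk ((r, a, b) # ps) = DAdd (DSmul r (DMul a b)) (mk ps)" by (simp add: mk_def dsum_def)
lemma wfl_Cons: "wfl ((r, a, b) # ps) \<longleftrightarrow> dp_wf a \<and> dp_wf b \<and> wfl ps" by (simp add: wfl_def)
lemma wfl_Nil: "wfl []" by (simp add: wfl_def)

lemma mk_wf: "wfl ps \<Longrightarrow> dp_wf (mk ps)"
  by (induction ps) (auto simp: mk_Nil mk_Cons wfl_Cons)

lemma dsum_wf: "(\<And>x. x \<in> set xs \<Longrightarrow> dp_wf x) \<Longrightarrow> dp_wf (dsum xs)"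
  by (induction xs) (auto simp: dsum_def)

lemma mk_append: "dp_eq scale (mk (xs @ ys)) (DAdd (mk xs) (mk ys))"
proof (induction xs)
  case Nil then show ?case by (simp add: mk_Nil dg.g_sym dg.g_zerol)
next
  case (Cons x xs)
  obtain r a b where x: "x = (r, a, b)" by (cases x) auto
  have "dp_eq scale (DAdd (DSmul r (DMul a b)) (mk (xs @ ys))) (DAdd (DSmul r (DMul a b)) (DAdd (mk xs) (mk ys)))"
    by (rule dg.g_caddr, rule Cons)
  also have "dp_eq scale \<dots> (DAdd (DAdd (DSmul r (DMul a b)) (mk xs)) (mk ys))"
    by (rule dg.g_sym, rule dg.g_assoc)
  finally show ?case by (simp add: x mk_Cons)
qed

lemma mk_smul: "dp_eq scale (DSmul s (mk ps)) (mk (map (\<lambda>(r, a, b). (s * r, a, b)) ps))"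
proof (induction ps)
  case Nil then show ?case by (simp add: mk_Nil dsmul_zero)
next
  case (Cons x ps)
  obtain r a b where x: "x = (r, a, b)" by (cases x) auto
  have "dp_eq scale (DSmul s (DAdd (DSmul r (DMul a b)) (mk ps))) (DAdd (DSmul s (DSmul r (DMul a b))) (DSmul s (mk ps)))"
    by (rule dp_smul_add)
  also have "dp_eq scale \<dots> (DAdd (DSmul (s * r) (DMul a b)) (mk (map (\<lambda>(r, a, b). (s * r, a, b)) ps)))"
    by (rule dg.g_cadd, rule dg.g_sym, rule dp_smul_smul, rule Cons)
  finally show ?case by (simp add: x mk_Cons)
qed

lemma wfl_smul: "wfl ps \<Longrightarrow> wfl (map (\<lambda>(r, a, b). (s * r, a, b)) ps)"
  by (auto simp: wfl_def)

abbreviation Sq where "Sq scale t \<equiv> dp_sq scale t"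

lemma sq_eq: "dp_eq scale t t' \<Longrightarrow> Sq scale t \<Longrightarrow> Sq scale t'"
  unfolding dp_sq_iff by (meson dg.g_sym dg.g_trans)

lemma sq_zero: "Sq scale DZero"
  unfolding dp_sq_iff by (rule exI[of _ "[]"]) (simp add: wfl_Nil mk_Nil dp_refl)

lemma sq_add: "Sq scale a \<Longrightarrow> Sq scale b \<Longrightarrow> Sq scale (DAdd a b)"
proof -
  assume "Sq scale a" "Sq scale b"
  then obtain ps qs where "wfl ps" "dp_eq scale a (mk ps)" "wfl qs" "dp_eq scale b (mk qs)"
    unfolding dp_sq_iff by blast
  moreover have "wfl (ps @ qs)" using \<open>wfl ps\<close> \<open>wfl qs\<close> by (auto simp: wfl_def)
  ultimately show ?thesis unfolding dp_sq_iff
    by (meson dg.g_cadd dg.g_sym dg.g_trans mk_append)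
qed

lemma sq_smul: "Sq scale a \<Longrightarrow> Sq scale (DSmul s a)"
proof -
  assume "Sq scale a"
  then obtain ps where "wfl ps" "dp_eq scale a (mk ps)" unfolding dp_sq_iff by blast
  thus ?thesis unfolding dp_sq_iff
    by (meson dg.g_trans dp_cong_smul mk_smul wfl_smul)
qed

lemma sq_neg: "Sq scale a \<Longrightarrow> Sq scale (DNeg a)"
  by (meson dg.g_sym dneg_as_smul sq_eq sq_smul)

lemma sq_mul: "dp_wf a \<Longrightarrow> dp_wf b \<Longrightarrow> Sq scale (DMul a b)"
  unfolding dp_sq_iff
  apply (rule exI[of _ "[(1, a, b)]"])
  apply (simp add: wfl_def mk_Cons mk_Nil)
  by (meson dg.g_sym dg.g_trans dg.g_zero dp_smul_one)

lemma sq_dsum: "(\<And>x. x \<in> set xs \<Longrightarrow> Sq scale x) \<Longrightarrow> Sq scale (dsum xs)"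
  by (induction xs) (auto simp: dsum_def sq_zero sq_add)

lemma sq_mk: "wfl ps \<Longrightarrow> Sq scale (mk ps)"
  unfolding dp_sq_iff by (blast intro: dp_refl)

abbreviation Q where "Q scale a b \<equiv> dp_indec_eq scale a b"

lemma q_of_eq: "dp_eq scale a b \<Longrightarrow> Q scale a b"
  unfolding dp_indec_eq_def using dg.g_eq_diff dg.g_sym sq_eq sq_zero by blast

interpretation qg: abgrp "dp_indec_eq scale" DAdd DZero DNeg
proof unfold_locales
  fix a b c a' b'
  show "Q scale a a" by (rule q_of_eq, rule dp_refl)
  show "Q scale a b \<Longrightarrow> Q scale b a" unfolding dp_indec_eq_def
    using dg.g_diff_swap dg.g_sym sq_eq sq_neg by blast
  show "Q scale a b \<Longrightarrow> Q scale b c \<Longrightarrow> Q scale a c" unfolding dp_indec_eq_def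
    using dg.g_diff_trans dg.g_sym sq_eq sq_add by blast
  show "Q scale a a' \<Longrightarrow> Q scale b b' \<Longrightarrow> Q scale (DAdd a b) (DAdd a' b')" unfolding dp_indec_eq_def
    using dg.g_diff_add dg.g_sym sq_eq sq_add by blast
  show "Q scale a a' \<Longrightarrow> Q scale (DNeg a) (DNeg a')" unfolding dp_indec_eq_def
    using dg.g_diff_neg dg.g_sym sq_eq sq_neg by blast
  show "Q scale (DAdd (DAdd a b) c) (DAdd a (DAdd b c))" by (rule q_of_eq, rule dp_add_assoc)
  show "Q scale (DAdd a b) (DAdd b a)" by (rule q_of_eq, rule dp_add_comm)
  show "Q scale (DAdd a DZero) a" by (rule q_of_eq, rule dp_add_zero)
  show "Q scale (DAdd a (DNeg a)) DZero" by (rule q_of_eq, rule dp_add_neg)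
qed

lemma q_sq0: "Sq scale t \<Longrightarrow> Q scale t DZero"
  unfolding dp_indec_eq_def by (meson dg.g_caddr dg.g_neg_zero dg.g_sym dg.g_trans dg.g_zero sq_eq)

lemma q_sq0D: "Q scale t DZero \<Longrightarrow> Sq scale t"
  unfolding dp_indec_eq_def by (meson dg.g_caddr dg.g_neg_zero dg.g_trans dg.g_zero sq_eq)

lemma q_smul_cong: "Q scale a b \<Longrightarrow> Q scale (DSmul r a) (DSmul r b)"
proof -
  assume "Q scale a b"
  hence "Sq scale (DSmul r (DAdd a (DNeg b)))" unfolding dp_indec_eq_def by (rule sq_smul)
  moreover have "dp_eq scale (DSmul r (DAdd a (DNeg b))) (DAdd (DSmul r a) (DNeg (DSmul r b)))"
    by (meson dg.g_caddr dg.g_trans dp_smul_add dsmul_neg)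
  ultimately show ?thesis unfolding dp_indec_eq_def by (rule sq_eq[rotated])
qed

lemma q_mul0: "dp_wf a \<Longrightarrow> dp_wf b \<Longrightarrow> Q scale (DMul a b) DZero"
  by (rule q_sq0, rule sq_mul)

lemma q_add_sq: "Sq scale m \<Longrightarrow> Q scale (DAdd m y) y"
  by (meson q_sq0 qg.g_caddl qg.g_trans qg.g_zerol)


lemma dpow_wf: "dp_wf a \<Longrightarrow> dp_wf (dpow a k)"
  by (induction k) auto

lemma mid_sq:
  assumes "dp_wf a" "dp_wf b"
  shows "Sq scale (dsum (map (\<lambda>i. DMul (DGam i a) (DGam (n - i) b)) [1..<n]))"
  by (rule sq_dsum) (use assms in \<open>auto intro!: sq_mul\<close>)

lemma gam_zero_sq: "1 \<le> n \<Longrightarrow> Sq scale (DGam n DZero)"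
proof -
  assume n: "1 \<le> n"
  have "dp_eq scale (DMul (dpow DZero (n - 1)) (DGam n DZero)) (DGam n (DMul DZero DZero))"
    by (rule dg.g_sym, rule dp_gam_mul[OF n])
  also have "dp_eq scale \<dots> (DGam n DZero)" by (rule dp_cong_gam, rule dmul_zero)
  finally show ?thesis by (rule sq_eq) (rule sq_mul, use n in \<open>auto simp: dpow_wf\<close>)
qed

lemma gam_add_q: "1 \<le> n \<Longrightarrow> dp_wf a \<Longrightarrow> dp_wf b \<Longrightarrow>
   Q scale (DGam n (DAdd a b)) (DAdd (DGam n a) (DGam n b))"
  using q_of_eq[OF dp_gam_add] mid_sq q_add_sq qg.g_caddr qg.g_trans by meson

lemma gam_mk_sq: "1 \<le> n \<Longrightarrow> wfl ps \<Longrightarrow> Sq scale (DGam n (mk ps))"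
proof (induction ps)
  case Nil then show ?case by (simp add: mk_Nil gam_zero_sq)
next
  case (Cons x ps)
  obtain r a b where x: "x = (r, a, b)" by (cases x) auto
  have w: "dp_wf a" "dp_wf b" "wfl ps" using Cons.prems x by (auto simp: wfl_Cons)
  have wx: "dp_wf (DSmul r (DMul a b))" using w by simp
  have s1: "Sq scale (DGam n (DSmul r (DMul a b)))"
  proof -
    have "dp_eq scale (DSmul (r ^ n) (DMul (dpow a (n - 1)) (DGam n b))) (DGam n (DSmul r (DMul a b)))"
      by (meson dg.g_sym dg.g_trans dp_cong_smul dp_gam_mul dp_gam_smul Cons.prems(1))
    moreover have "Sq scale (DSmul (r ^ n) (DMul (dpow a (n - 1)) (DGam n b)))"
      by (rule sq_smul, rule sq_mul) (use w dpow_wf Cons.prems in auto)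
    ultimately show ?thesis by (rule sq_eq)
  qed
  have "Q scale (DGam n (DAdd (DSmul r (DMul a b)) (mk ps))) (DAdd (DGam n (DSmul r (DMul a b))) (DGam n (mk ps)))"
    by (rule gam_add_q) (use Cons.prems wx mk_wf w in auto)
  moreover have "Q scale (DAdd (DGam n (DSmul r (DMul a b))) (DGam n (mk ps))) DZero"
    using s1 Cons.IH[OF Cons.prems(1) w(3)] by (meson q_sq0 qg.g_add_zero_both)
  ultimately show ?case using x mk_Cons q_sq0D qg.g_trans by metis
qed

lemma q_ex_mk: "Q scale a b \<Longrightarrow> \<exists>ps. wfl ps \<and> dp_eq scale a (DAdd b (mk ps))"
proof -
  assume "Q scale a b"
  then obtain ps where ps: "wfl ps" "dp_eq scale (DAdd a (DNeg b)) (mk ps)"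
    unfolding dp_indec_eq_def dp_sq_iff by blast
  have "dp_eq scale a (DAdd b (DAdd a (DNeg b)))"
    by (meson dg.g_lcomm dg.g_caddr dg.g_negr dg.g_zero dg.g_trans dg.g_sym)
  also have "dp_eq scale \<dots> (DAdd b (mk ps))" by (rule dg.g_caddr, rule ps(2))
  finally show ?thesis using ps(1) by blast
qed

lemma gam_resp: "1 \<le> n \<Longrightarrow> dp_wf a \<Longrightarrow> dp_wf b \<Longrightarrow> Q scale a b \<Longrightarrow> Q scale (DGam n a) (DGam n b)"
proof -
  assume n: "1 \<le> n" and w: "dp_wf a" "dp_wf b" and q: "Q scale a b"
  obtain ps where ps: "wfl ps" "dp_eq scale a (DAdd b (mk ps))" using q_ex_mk[OF q] by blast
  have "Q scale (DGam n a) (DGam n (DAdd b (mk ps)))" by (rule q_of_eq, rule dp_cong_gam, rule ps(2))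
  also have "Q scale \<dots> (DAdd (DGam n b) (DGam n (mk ps)))"
    by (rule gam_add_q) (use n w mk_wf ps in auto)
  also have "Q scale \<dots> (DAdd (DGam n b) DZero)"
    by (rule qg.g_caddr, rule q_sq0, rule gam_mk_sq) (use n ps in auto)
  also have "Q scale \<dots> (DGam n b)" by (rule qg.g_zero)
  finally show ?thesis .
qed

lemma charq: "prime p \<Longrightarrow> dp_wf y \<Longrightarrow> Sq scale (DSmul (of_nat p) (DGam p y))"
proof -
  assume p: "prime p" and y: "dp_wf y"
  have p2: "2 \<le> p" using p by (simp add: prime_ge_2_nat)
  have "dp_eq scale (DMul (DGam 1 y) (DGam (p - 1) y)) (DSmul (of_nat ((1 + (p - 1)) choose 1)) (DGam (1 + (p - 1)) y))"
    by (rule dp_gam_prod) (use p2 in auto)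
  moreover have "1 + (p - 1) = p" using p2 by simp
  ultimately have "dp_eq scale (DMul (DGam 1 y) (DGam (p - 1) y)) (DSmul (of_nat p) (DGam p y))" by simp
  moreover have "Sq scale (DMul (DGam 1 y) (DGam (p - 1) y))" by (rule sq_mul) (use y p2 in auto)
  ultimately show ?thesis using sq_eq by blast
qed

lemma smul_int_add: "dp_eq scale (DSmul (of_int (x + y)) g) (DAdd (DSmul (of_int x) g) (DSmul (of_int y) g))"
  using dp_add_smul[of scale "of_int x" "of_int y" g] by simp

lemma smul_int_mul: "dp_eq scale (DSmul (of_int (c * x)) g) (DSmul (of_int c) (DSmul (of_int x) g))"
  using dp_smul_smul[of scale "of_int c" "of_int x" g] by simp

lemma ideal_add: "Sq scale (DSmul (of_int x) g) \<Longrightarrow> Sq scale (DSmul (of_int y) g) \<Longrightarrow> Sq scale (DSmul (of_int (x + y)) g)"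
  using sq_eq[OF dg.g_sym[OF smul_int_add]] sq_add by blast

lemma ideal_mul: "Sq scale (DSmul (of_int x) g) \<Longrightarrow> Sq scale (DSmul (of_int (c * x)) g)"
  using sq_eq[OF dg.g_sym[OF smul_int_mul]] sq_smul by blast

lemma binom_in_S:
  assumes a: "dp_wf a" and i: "0 < i" "i < n"
  shows "Sq scale (DSmul (of_int (int (n choose i))) (DGam n a))"
proof -
  have "dp_eq scale (DMul (DGam i a) (DGam (n - i) a)) (DSmul (of_nat ((i + (n - i)) choose i)) (DGam (i + (n - i)) a))"
    by (rule dp_gam_prod) (use i in auto)
  moreover have "i + (n - i) = n" using i by simp
  moreover have "Sq scale (DMul (DGam i a) (DGam (n - i) a))" by (rule sq_mul) (use a i in auto)
  ultimately show ?thesis using sq_eq by (metis of_int_of_nat_eq)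
qed

lemma NPP:
  assumes n: "2 \<le> n" "\<not> primepow n" and a: "dp_wf a"
  shows "Sq scale (DGam n a)"
proof -
  define S where "S = {c::int. Sq scale (DSmul (of_int c) (DGam n a))}"
  have cl1: "\<And>x y. x \<in> S \<Longrightarrow> y \<in> S \<Longrightarrow> x + y \<in> S"
    unfolding S_def mem_Collect_eq by (rule ideal_add)
  have cl2: "\<And>c x. x \<in> S \<Longrightarrow> c * x \<in> S"
    unfolding S_def mem_Collect_eq by (rule ideal_mul)
  note cl = cl1 cl2
  have bS: "int (n choose i) \<in> S" if "0 < i" "i < n" for i
    unfolding S_def using binom_in_S[OF a that] by simp
  have nS: "int n \<in> S" using bS[of 1] n by simp
  obtain d where d: "d > 0" "d \<in> S" "\<forall>x\<in>S. d dvd x"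
    using int_ideal_gen[of S "int n", OF cl nS] n by auto
  have "d = 1"
  proof (rule ccontr)
    assume "d \<noteq> 1"
    hence "nat d \<noteq> 1" using d by simp
    then obtain p where p: "prime p" "p dvd nat d" using prime_factor_nat by blast
    have "int p dvd int (nat d)" using p(2) by (simp only: of_nat_dvd_iff)
    hence pd: "int p dvd d" using d(1) by simp
    have "int p dvd int n" using pd d nS dvd_trans by blast
    hence pn: "p dvd n" by simp
    define k where "k = multiplicity p n"
    obtain m where m: "n = p ^ k * m" "\<not> p dvd m"
      using multiplicity_decompose'[of n p] n p unfolding k_def
      by (metis not_prime_unit numeral_le_iff one_le_numeral order_less_le_trans zero_less_numeral less_le_not_le semiring_norm(69) bot_nat_0.not_eq_extremum)
    have n0: "n \<noteq> 0" and pu: "\<not> is_unit p" using n p by auto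
    have k: "k > 0" using pn unfolding k_def multiplicity_gt_zero_iff[OF n0 pu] .
    have m1: "m \<noteq> 1"
    proof
      assume "m = 1"
      hence "primepow n" using m p k by (auto simp: primepow_def)
      thus False using n by simp
    qed
    have m0: "m \<noteq> 0"
    proof
      assume "m = 0" hence "n = 0" using m by simp
      thus False using n by simp
    qed
    have pk: "0 < p ^ k" "p ^ k < n"
    proof -
      show "0 < p ^ k" using p prime_gt_0_nat by simp
      have "p ^ k * 1 < p ^ k * m" using m0 m1 \<open>0 < p ^ k\<close> by (intro mult_strict_left_mono) auto
      thus "p ^ k < n" using m by simp
    qed
    have "int (n choose p ^ k) \<in> S" by (rule bS) (use pk in auto)
    hence "d dvd int (n choose p ^ k)" using d by blast
    hence "int p dvd int (n choose p ^ k)" using pd dvd_trans by blast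
    hence "p dvd (n choose p ^ k)" by simp
    moreover have "[(m * p ^ k) choose (p ^ k) = m] (mod p)" by (rule nt5[OF p(1)])
    ultimately have "p dvd m" using m by (metis cong_dvd_iff mult.commute)
    thus False using m by simp
  qed
  hence "Sq scale (DSmul 1 (DGam n a))" using d S_def by simp
  thus ?thesis using sq_eq dp_smul_one by blast
qed

lemma PP:
  assumes p: "prime p" and k: "1 \<le> k" and a: "dp_wf a"
  shows "Sq scale (DSmul (of_nat p) (DGam (p ^ k) a))"
proof -
  define N where "N = p ^ k"
  define S where "S = {c::int. Sq scale (DSmul (of_int c) (DGam N a))}"
  have cl1: "\<And>x y. x \<in> S \<Longrightarrow> y \<in> S \<Longrightarrow> x + y \<in> S"
    unfolding S_def mem_Collect_eq by (rule ideal_add)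
  have cl2: "\<And>c x. x \<in> S \<Longrightarrow> c * x \<in> S"
    unfolding S_def mem_Collect_eq by (rule ideal_mul)
  note cl = cl1 cl2
  have p2: "2 \<le> p" using p by (simp add: prime_ge_2_nat)
  have "p \<le> N" unfolding N_def using k p2
    by (metis One_nat_def le_trans self_le_power one_le_numeral power_one_right power_increasing)
  hence NS: "int N \<in> S" unfolding S_def using binom_in_S[OF a, of 1 N] p2 by simp
  have "int p \<in> S"
  proof (cases "k = 1")
    case True then show ?thesis using NS N_def by simp
  next
    case False
    define C where "C = CC p (p ^ (k - 1))"
    have kk: "p * p ^ (k - 1) = N" unfolding N_def using k by (metis Suc_diff_le diff_Suc_1 power_Suc)
    have "dp_eq scale (DGam p (DGam (p ^ (k - 1)) a)) (DSmul (of_nat C) (DGam N a))"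
      using dp_gam_comp[of p "p ^ (k - 1)" scale a] p2 kk unfolding C_def CC_def
      by (simp add: Suc_leI prime_gt_0_nat p)
    hence "dp_eq scale (DSmul (of_nat p) (DGam p (DGam (p ^ (k - 1)) a))) (DSmul (of_int (int p * int C)) (DGam N a))"
      by (metis dp_cong_smul dg.g_trans dg.g_sym dp_smul_smul of_int_mult of_int_of_nat_eq)
    moreover have "Sq scale (DSmul (of_nat p) (DGam p (DGam (p ^ (k - 1)) a)))"
      by (rule charq[OF p]) (use a p2 in simp)
    ultimately have pC: "int p * int C \<in> S" unfolding S_def using sq_eq by blast
    have "[C = 1] (mod p)" unfolding C_def by (rule nt4[OF p])
    hence "coprime C p" using p2 by (metis cong_imp_coprime cong_sym coprime_1_left)
    hence "coprime (int C) (int (p ^ (k - 1)))" by (simp add: coprime_power_right_iff)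
    hence "gcd (int N) (int p * int C) = int p"
      unfolding kk[symmetric] by (simp add: gcd_mult_left coprime_commute gcd.commute coprime_iff_gcd_eq_1 gcd_mult_distrib_int[symmetric])
    moreover obtain u v where "u * int N + v * (int p * int C) = gcd (int N) (int p * int C)"
      using bezout_int by blast
    ultimately have "int p = u * int N + v * (int p * int C)" by simp
    thus ?thesis using cl NS pC by metis
  qed
  thus ?thesis unfolding S_def N_def by simp
qed


fun act :: "'r::comm_ring_1 ut \<Rightarrow> ('r, 'v) dpt \<Rightarrow> ('r, 'v) dpt" where
  "act (UR r) a = DSmul r a"
| "act (Phi n) a = (if 1 \<le> n then DGam n a else DZero)"
| "act (UAdd u u') a = DAdd (act u a) (act u' a)"
| "act (UNeg u) a = DNeg (act u a)"
| "act (UMul u u') a = act u (act u' a)"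

lemma act_wf: "dp_wf a \<Longrightarrow> dp_wf (act u a)"
  by (induction u arbitrary: a) auto

lemma act_resp: "dp_wf a \<Longrightarrow> dp_wf b \<Longrightarrow> Q scale a b \<Longrightarrow> Q scale (act u a) (act u b)"
proof (induction u arbitrary: a b)
  case (UR r) then show ?case by (simp add: q_smul_cong)
next
  case (Phi n) then show ?case by (auto intro: gam_resp qg.g_refl)
next
  case (UAdd u u') then show ?case by (simp add: qg.g_cadd)
next
  case (UNeg u) then show ?case by (simp add: qg.g_cneg)
next
  case (UMul u u') then show ?case by (simp add: act_wf)
qed

lemma act_add: "dp_wf a \<Longrightarrow> dp_wf b \<Longrightarrow> Q scale (act u (DAdd a b)) (DAdd (act u a) (act u b))"
proof (induction u arbitrary: a b)
  case (UR r) then show ?case by (simp add: q_of_eq dp_smul_add)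
next
  case (Phi n) then show ?case by (auto intro: gam_add_q qg.g_sym qg.g_zero)
next
  case (UAdd u u') then show ?case by (simp; meson qg.g_cadd qg.g_swap qg.g_trans)
next
  case (UNeg u) then show ?case by (simp; meson qg.g_cneg qg.g_neg_add qg.g_trans)
next
  case (UMul u u')
  have "Q scale (act u (act u' (DAdd a b))) (act u (DAdd (act u' a) (act u' b)))"
    by (rule act_resp) (use UMul in \<open>auto simp: act_wf\<close>)
  also have "Q scale \<dots> (DAdd (act u (act u' a)) (act u (act u' b)))"
    by (rule UMul.IH(1)) (use UMul in \<open>auto simp: act_wf\<close>)
  finally show ?case by simp
qed

lemma act_zero: "Q scale (act u DZero) DZero"
proof -
  have "Q scale (DAdd (act u DZero) (act u DZero)) (act u (DAdd DZero DZero))"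
    by (rule qg.g_sym, rule act_add) auto
  also have "Q scale \<dots> (act u DZero)" by (rule act_resp) (auto intro: qg.g_zero)
  finally show ?thesis by (rule qg.g_idem0)
qed

lemma act_neg: "dp_wf a \<Longrightarrow> Q scale (act u (DNeg a)) (DNeg (act u a))"
proof -
  assume a: "dp_wf a"
  have "Q scale (DAdd (act u a) (act u (DNeg a))) (act u (DAdd a (DNeg a)))"
    by (rule qg.g_sym, rule act_add) (use a in auto)
  also have "Q scale \<dots> (act u DZero)" by (rule act_resp) (use a in \<open>auto intro: qg.g_negr\<close>)
  also have "Q scale \<dots> DZero" by (rule act_zero)
  finally show ?thesis by (rule qg.g_neg_uniq)
qed

lemma gam_pp_step:
  assumes p: "prime p" and a: "dp_wf a"
  shows "Q scale (DGam p (DGam (p ^ k) a)) (DGam (p ^ Suc k) a)"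
proof (cases "k = 0")
  case True
  have p1: "1 \<le> p" using p prime_ge_1_nat by blast
  have g1: "Q scale (DGam 1 a) a" by (rule q_of_eq, rule dp_gam_one)
  have "Q scale (DGam p (DGam 1 a)) (DGam p a)"
    by (rule gam_resp[OF p1 _ a g1]) (use a in simp)
  then show ?thesis using True by simp
next
  case False
  have p2: "2 \<le> p" using p by (simp add: prime_ge_2_nat)
  define N where "N = p ^ Suc k"
  define C where "C = CC p (p ^ k)"
  have e1: "dp_eq scale (DGam p (DGam (p ^ k) a)) (DSmul (of_nat C) (DGam N a))"
    using dp_gam_comp[of p "p ^ k" scale a] p2 unfolding C_def CC_def N_def
    by (simp add: Suc_leI prime_gt_0_nat p)
  have cg: "[C = 1] (mod p)" unfolding C_def by (rule nt4[OF p])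
  have "C \<ge> 1" using cg p2 by (cases C) (auto simp: cong_def)
  from cong_le_nat[OF this, of p] cg obtain t where t: "C = t * p + 1" by blast
  have e2: "dp_eq scale (DSmul (of_nat C) (DGam N a)) (DAdd (DSmul (of_nat t) (DSmul (of_nat p) (DGam N a))) (DSmul 1 (DGam N a)))"
    using dp_add_smul[of scale "of_nat t * of_nat p" 1 "DGam N a"] dp_smul_smul[of scale "of_nat t" "of_nat p" "DGam N a"]
    unfolding t of_nat_add of_nat_mult of_nat_1 by (meson dg.g_caddl dg.g_trans)
  have s: "Sq scale (DSmul (of_nat t) (DSmul (of_nat p) (DGam N a)))"
    unfolding N_def by (rule sq_smul, rule PP[OF p _ a]) simp
  have "Q scale (DGam p (DGam (p ^ k) a)) (DAdd (DSmul (of_nat t) (DSmul (of_nat p) (DGam N a))) (DSmul 1 (DGam N a)))"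
    using e1 e2 by (meson q_of_eq dg.g_trans)
  also have "Q scale \<dots> (DSmul 1 (DGam N a))" by (rule q_add_sq[OF s])
  also have "Q scale \<dots> (DGam N a)" by (rule q_of_eq, rule dp_smul_one)
  finally show ?thesis unfolding N_def .
qed

lemma act_upow: "prime p \<Longrightarrow> dp_wf a \<Longrightarrow> Q scale (act (upow (Phi p) k) a) (DGam (p ^ k) a)"
proof (induction k)
  case 0
  have "Q scale (DSmul 1 a) a" by (rule q_of_eq, rule dp_smul_one)
  moreover have "Q scale a (DGam 1 a)" by (rule qg.g_sym, rule q_of_eq, rule dp_gam_one)
  ultimately show ?case using qg.g_trans by simp
next
  case (Suc k)
  have p1: "1 \<le> p" using Suc.prems prime_ge_1_nat by blast
  have "Q scale (DGam p (act (upow (Phi p) k) a)) (DGam p (DGam (p ^ k) a))"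
    by (rule gam_resp[OF p1]) (use Suc act_wf one_le_power[OF p1, of k] in auto)
  also have "Q scale \<dots> (DGam (p ^ Suc k) a)" by (rule gam_pp_step) (use Suc in auto)
  finally show ?case using p1 by simp
qed

lemma act_EE: "1 \<le> n \<Longrightarrow> dp_wf a \<Longrightarrow> Q scale (act (EE n) a) (DGam n a)"
proof -
  assume n: "1 \<le> n" and a: "dp_wf a"
  show ?thesis
  proof (cases "n = 1")
    case True
    have "Q scale (DSmul 1 a) a" by (rule q_of_eq, rule dp_smul_one)
    moreover have "Q scale a (DGam 1 a)" by (rule qg.g_sym, rule q_of_eq, rule dp_gam_one)
    ultimately have "Q scale (DSmul 1 a) (DGam 1 a)" by (rule qg.g_trans)
    then show ?thesis using True by (simp add: EE_def)
  next
    case n1: False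
    show ?thesis
    proof (cases "primepow n")
      case True
      then obtain p k where pk: "prime p" "0 < k" "n = p ^ k" by (auto simp: primepow_def)
      show ?thesis unfolding pk(3) EE_pp[OF pk(1,2)] by (rule act_upow[OF pk(1) a])
    next
      case False
      have "Sq scale (DGam n a)" by (rule NPP) (use n n1 False a in auto)
      then show ?thesis using n1 False
        by (simp add: EE_npp; meson dsmul_0 q_of_eq q_sq0 qg.g_sym qg.g_trans)
    qed
  qed
qed

lemma act_ueq: "u_eq w w' \<Longrightarrow> dp_wf a \<Longrightarrow> Q scale (act w a) (act w' a)"
proof (induction arbitrary: a rule: u_eq.induct)
  case (u_refl a) then show ?case by (simp add: qg.g_refl)
next
  case (u_sym a b) then show ?case by (simp add: qg.g_sym)
next
  case (u_trans a b c) then show ?case by (meson qg.g_trans)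
next
  case (u_cong_add a a' b b') then show ?case by (simp add: qg.g_cadd)
next
  case (u_cong_neg a a') then show ?case by (simp add: qg.g_cneg)
next
  case (u_cong_mul a a' b b' x)
  have "Q scale (act a (act b x)) (act a (act b' x))"
    by (rule act_resp) (use u_cong_mul act_wf in auto)
  also have "Q scale \<dots> (act a' (act b' x))" by (rule u_cong_mul.IH(1)) (use u_cong_mul act_wf in auto)
  finally show ?case by simp
next
  case (u_add_assoc a b c) then show ?case by (simp add: qg.g_assoc)
next
  case (u_add_comm a b) then show ?case by (simp add: qg.g_comm)
next
  case (u_add_zero a x) then show ?case by (simp; meson dsmul_0 q_of_eq qg.g_caddr qg.g_trans qg.g_zero)
next
  case (u_add_neg a x) then show ?case by (simp; meson dsmul_0 q_of_eq qg.g_negr qg.g_sym qg.g_trans)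
next
  case (u_mul_assoc a b c) then show ?case by (simp add: qg.g_refl)
next
  case (u_distrib_left a b c x) then show ?case by (simp add: act_add act_wf)
next
  case (u_distrib_right a b c) then show ?case by (simp add: qg.g_refl)
next
  case (u_one_left a) then show ?case by (simp add: q_of_eq dp_smul_one)
next
  case (u_one_right a x)
  have "Q scale (act a (DSmul 1 x)) (act a x)"
    by (rule act_resp) (use u_one_right in \<open>auto intro: q_of_eq dp_smul_one\<close>)
  then show ?case by simp
next
  case (u_R_add r s x) then show ?case by (simp add: q_of_eq dp_add_smul)
next
  case (u_R_mul r s x) then show ?case by (simp add: q_of_eq dp_smul_smul)
next
  case (u_phi_comm p q x)
  show ?case
  proof (cases "p = q")
    case True then show ?thesis by (simp add: qg.g_refl)
  next
    case False
    have p2: "2 \<le> p" "2 \<le> q" using u_phi_comm by (auto simp: prime_ge_2_nat)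
    have npp: "\<not> primepow (p * q)" using pp_mult_diff[of p q 1 1] u_phi_comm False by simp
    have sq: "Sq scale (DGam (p * q) x)" by (rule NPP) (use npp u_phi_comm p2 in \<open>auto intro: order_trans[OF _ mult_le_mono1[of 1 p q]]\<close>)
    have z1: "Q scale (DGam p (DGam q x)) DZero"
      using dp_gam_comp[of p q scale x] p2 sq sq_smul q_sq0 sq_eq dg.g_sym by (metis one_le_numeral order_trans)
    have z2: "Q scale (DGam q (DGam p x)) DZero"
      using dp_gam_comp[of q p scale x] p2 sq sq_smul q_sq0 sq_eq dg.g_sym
      by (metis one_le_numeral order_trans mult.commute)
    show ?thesis using z1 z2 p2 by (simp; meson qg.g_sym qg.g_trans)
  qed
next
  case (u_phi_char p x)
  have p1: "1 \<le> p" using u_phi_char prime_ge_1_nat by blast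
  have "Q scale (DSmul (of_nat p) (DGam p x)) DZero" by (rule q_sq0, rule charq) (use u_phi_char in auto)
  then show ?case using p1 by (simp; meson dsmul_0 q_of_eq qg.g_sym qg.g_trans)
next
  case (u_phi_frob p r x)
  have p1: "1 \<le> p" using u_phi_frob prime_ge_1_nat by blast
  then show ?case by (simp add: q_of_eq dp_gam_smul)
qed

fun gg :: "('r::comm_ring_1, 'v) tt \<Rightarrow> ('r, 'v) dpt" where
  "gg (T u v) = act u (DGen v)"
| "gg TZero = DZero"
| "gg (TAdd a b) = DAdd (gg a) (gg b)"
| "gg (TNeg a) = DNeg (gg a)"

lemma gg_wf: "dp_wf (gg t)"
  by (induction t) (auto intro: act_wf)

lemma gg_resp: "t_eq scale t t' \<Longrightarrow> Q scale (gg t) (gg t')"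
proof (induction rule: t_eq.induct)
  case (t_cong_T u u' v) then show ?case by (simp add: act_ueq)
next
  case (t_bil_left u u' v) then show ?case by (simp add: qg.g_refl)
next
  case (t_bil_right u v w)
  have "Q scale (act u (DGen (v + w))) (act u (DAdd (DGen v) (DGen w)))"
    by (rule act_resp) (auto intro: q_of_eq dp_gen_add)
  also have "Q scale \<dots> (DAdd (act u (DGen v)) (act u (DGen w)))" by (rule act_add) auto
  finally show ?case by simp
next
  case (t_balanced u r v)
  have "Q scale (act u (DSmul r (DGen v))) (act u (DGen (scale r v)))"
    by (rule act_resp) (auto intro: q_of_eq dp_gen_smul dg.g_sym)
  then show ?case by simp
qed (auto intro: qg.g_refl qg.g_sym qg.g_trans qg.g_cadd qg.g_cneg qg.g_assoc qg.g_comm qg.g_zero qg.g_negr)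

lemma gg_tact: "Q scale (gg (tact w t)) (act w (gg t))"
proof (induction t)
  case (T u v) then show ?case by (simp add: qg.g_refl)
next
  case TZero then show ?case by (simp add: act_zero qg.g_sym)
next
  case (TAdd a b) then show ?case
    by (simp; meson act_add gg_wf qg.g_cadd qg.g_sym qg.g_trans)
next
  case (TNeg a) then show ?case
    by (simp; meson act_neg gg_wf qg.g_cneg qg.g_sym qg.g_trans)
qed

lemma gg_ff: "dp_wf a \<Longrightarrow> Q scale (gg (ff a)) a"
proof (induction a)
  case (DGen v) then show ?case by (simp add: q_of_eq dp_smul_one)
next
  case DZero then show ?case by (simp add: qg.g_refl)
next
  case (DAdd a b) then show ?case by (simp add: qg.g_cadd)
next
  case (DNeg a) then show ?case by (simp add: qg.g_cneg)
next
  case (DMul a b) then show ?case by (simp add: q_mul0 qg.g_sym)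
next
  case (DSmul r a)
  have "Q scale (gg (tact (UR r) (ff a))) (DSmul r (gg (ff a)))" using gg_tact[of scale "UR r"] by simp
  also have "Q scale \<dots> (DSmul r a)" by (rule q_smul_cong) (use DSmul in auto)
  finally show ?case by simp
next
  case (DGam n a)
  have "Q scale (gg (tact (EE n) (ff a))) (act (EE n) (gg (ff a)))" by (rule gg_tact)
  also have "Q scale \<dots> (act (EE n) a)" by (rule act_resp) (use DGam gg_wf in auto)
  also have "Q scale \<dots> (DGam n a)" by (rule act_EE) (use DGam in auto)
  finally show ?case by simp
qed

lemma ff_act: "u_wf u \<Longrightarrow> t_eq scale (ff (act u a)) (tact u (ff a))"
proof (induction u arbitrary: a)
  case (UR r) then show ?case by (simp add: t_refl)
next
  case (Phi p)
  have p1: "1 \<le> p" using Phi prime_ge_1_nat by auto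
  have "t_eq scale (tact (EE p) (ff a)) (tact (Phi p) (ff a))"
    by (rule tact_ueq) (use Phi in \<open>simp add: EE_prime u_one_right\<close>)
  then show ?case using p1 by simp
next
  case (UAdd u u') then show ?case by (simp; meson tact_add tg.g_cadd tg.g_sym tg.g_trans)
next
  case (UNeg u) then show ?case by (simp; meson tact_neg tg.g_cneg tg.g_sym tg.g_trans)
next
  case (UMul u u')
  have "t_eq scale (ff (act u (act u' a))) (tact u (ff (act u' a)))" using UMul by simp
  also have "t_eq scale \<dots> (tact u (tact u' (ff a)))" by (rule tact_cong) (use UMul in simp)
  also have "t_eq scale \<dots> (tact (UMul u u') (ff a))" by (rule tg.g_sym, rule tact_mul)
  finally show ?case by simp
qed

lemma ff_surj: "t_wf t \<Longrightarrow> \<exists>a. dp_wf a \<and> t_eq scale (ff a) t"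
proof (induction t)
  case (T u v)
  have "t_eq scale (ff (act u (DGen v))) (T (UMul u (UR 1)) v)" using ff_act[of u scale "DGen v"] T by simp
  also have "t_eq scale \<dots> (T u v)" by (rule t_cong_T, rule u_one_right)
  finally show ?case using act_wf[of "DGen v" u] by auto
next
  case TZero then show ?case by (auto intro!: exI[of _ DZero] t_refl)
next
  case (TAdd a b)
  then obtain x y where "dp_wf x" "t_eq scale (ff x) a" "dp_wf y" "t_eq scale (ff y) b" by auto
  then show ?case by (auto intro!: exI[of _ "DAdd x y"] tg.g_cadd)
next
  case (TNeg a)
  then obtain x where "dp_wf x" "t_eq scale (ff x) a" by auto
  then show ?case by (auto intro!: exI[of _ "DNeg x"] tg.g_cneg)
qed

theorem mainTheorem10:
  fixes scale :: "'r::comm_ring_1 \<Rightarrow> 'v::ab_group_add \<Rightarrow> 'v"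
  assumes "module scale"
  shows "\<exists>f :: ('r, 'v) dpt \<Rightarrow> ('r, 'v) tt.
    (\<forall>a. dp_wf a \<longrightarrow> t_wf (f a)) \<and>
    (\<forall>a b. dp_wf a \<longrightarrow> dp_wf b \<longrightarrow> (t_eq scale (f a) (f b) \<longleftrightarrow> dp_indec_eq scale a b)) \<and>
    (\<forall>t. t_wf t \<longrightarrow> (\<exists>a. dp_wf a \<and> t_eq scale (f a) t)) \<and>
    (\<forall>a b. dp_wf a \<longrightarrow> dp_wf b \<longrightarrow> t_eq scale (f (DAdd a b)) (TAdd (f a) (f b))) \<and>
    (\<forall>r a. dp_wf a \<longrightarrow> t_eq scale (f (DSmul r a)) (tact (UR r) (f a))) \<and>
    (\<forall>p a. prime p \<longrightarrow> dp_wf a \<longrightarrow> t_eq scale (f (DGam p a)) (tact (Phi p) (f a)))"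
proof (rule exI[of _ ff], intro conjI allI impI)
  fix a :: "('r, 'v) dpt" show "t_wf (ff a)" by (rule ff_wf)
next
  fix a b :: "('r, 'v) dpt" assume a: "dp_wf a" and b: "dp_wf b"
  show "t_eq scale (ff a) (ff b) \<longleftrightarrow> dp_indec_eq scale a b"
  proof
    assume "t_eq scale (ff a) (ff b)"
    hence "Q scale (gg (ff a)) (gg (ff b))" by (rule gg_resp)
    thus "dp_indec_eq scale a b" using gg_ff[OF a, of scale] gg_ff[OF b, of scale]
      by (meson qg.g_sym qg.g_trans)
  next
    assume "dp_indec_eq scale a b" then show "t_eq scale (ff a) (ff b)" by (rule ff_indec)
  qed
next
  fix t :: "('r, 'v) tt" assume "t_wf t" then show "\<exists>a. dp_wf a \<and> t_eq scale (ff a) t" by (rule ff_surj)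
next
  fix a b :: "('r, 'v) dpt" show "t_eq scale (ff (DAdd a b)) (TAdd (ff a) (ff b))" by (simp add: t_refl)
next
  fix r and a :: "('r, 'v) dpt" show "t_eq scale (ff (DSmul r a)) (tact (UR r) (ff a))" by (simp add: t_refl)
next
  fix p :: nat and a :: "('r, 'v) dpt" assume p: "prime p"
  show "t_eq scale (ff (DGam p a)) (tact (Phi p) (ff a))"
    by (simp, rule tact_ueq) (simp add: EE_prime[OF p] u_one_right)
qed


end
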